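(* Let $n\ge2$, let $R=\Bbbk\langle u,d\mid d^2u+ud^2,\ du^2+u^2d\rangle$, let $\xi$ be a primitive $n$-th root of unity and let $G=\mathbb Z_n=\langle g\rangle$ act on $R$ by $g(u)=\xi u$, $g(d)=\xi^{-1}d$. In $R\#\Bbbk G$ let $f_i=\frac1n\sum_{j=0}^{n-1}\xi^{ij}\#g^j$, $f=f_0+\dots+f_{n-1}$ and $B=f(R\#\Bbbk G)f$. Let $\beta\in\Bbbk^n$ with $\beta_i=-1$ for all $i$. Then $B\cong\mathcal H(0,\beta,0)$, via $e_i\mapsto f_i$, $u_i\mapsto f_i(u\#f)$, $d_i\mapsto (d\#f)f_i$.
   Context: $\Bbbk$ is an algebraically closed field of characteristic zero. The skew group algebra $R\#\Bbbk G$ is $R\otimes\Bbbk G$ with $(r\#g)(s\#h)=rg(s)\#gh$. Indices are mod $n$, $Q_0=\{0,\dots,n-1\}$; $Q$ is the quiver with vertices $Q_0$ and arrows $u_i:i\to i+1$, $d_i:i+1\to i$; paths are written left to right, $e_i$ is the trivial path at $i$. For $\alpha,\beta\in\Bbbk^n$, $\mathcal H(\alpha,\beta,0)$ is $\Bbbk Q$ modulo the relations $d_{i-1}u_{i-1}u_i=\alpha_iu_id_iu_i+\beta_iu_iu_{i+1}d_{i+1}$ and $d_id_{i-1}u_{i-1}=\alpha_id_iu_id_i+\beta_iu_{i+1}d_{i+1}d_i$ for all $i\in Q_0$. *)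

theory Defs
  imports "HOL-Computational_Algebra.Polynomial"
begin

text \<open>An element of an algebra with basis 'b is a finitely supported function 'b => 'a.
  A basis multiplication m x y = Some (s, z) means x * y = s z; None means x * y = 0.\<close>

definition supp :: "('b \<Rightarrow> 'a::zero) \<Rightarrow> 'b set" where
  "supp x = {b. x b \<noteq> 0}"

definition conv :: "('b \<Rightarrow> 'b \<Rightarrow> ('a \<times> 'b) option) \<Rightarrow> ('b \<Rightarrow> 'a::comm_ring_1) \<Rightarrow> ('b \<Rightarrow> 'a) \<Rightarrow> 'b \<Rightarrow> 'a" where
  "conv m x y = (\<lambda>c. \<Sum>p \<in> supp x \<times> supp y.
      (case m (fst p) (snd p) of None \<Rightarrow> 0
         | Some (s, b) \<Rightarrow> if b = c then s * x (fst p) * y (snd p) else 0))"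

definition vec :: "'b \<Rightarrow> 'b \<Rightarrow> 'a::{zero,one}" where
  "vec b = (\<lambda>c. if c = b then 1 else 0)"

text \<open>Two-sided ideal generated by S (B = set of valid basis elements).\<close>
inductive_set ideal_gen :: "('b \<Rightarrow> 'b \<Rightarrow> ('a \<times> 'b) option) \<Rightarrow> 'b set \<Rightarrow> ('b \<Rightarrow> 'a::comm_ring_1) set \<Rightarrow> ('b \<Rightarrow> 'a) set"
  for m B S where
  gen: "s \<in> S \<Longrightarrow> s \<in> ideal_gen m B S"
| zero: "(\<lambda>_. 0) \<in> ideal_gen m B S"
| add: "x \<in> ideal_gen m B S \<Longrightarrow> y \<in> ideal_gen m B S \<Longrightarrow> (\<lambda>c. x c + y c) \<in> ideal_gen m B S"
| smult: "x \<in> ideal_gen m B S \<Longrightarrow> (\<lambda>c. a * x c) \<in> ideal_gen m B S"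
| left: "b \<in> B \<Longrightarrow> x \<in> ideal_gen m B S \<Longrightarrow> conv m (vec b) x \<in> ideal_gen m B S"
| right: "b \<in> B \<Longrightarrow> x \<in> ideal_gen m B S \<Longrightarrow> conv m x (vec b) \<in> ideal_gen m B S"

datatype letter = U | D

definition free_mult :: "letter list \<Rightarrow> letter list \<Rightarrow> ('a::comm_ring_1 \<times> letter list) option" where
  "free_mult v w = Some (1, v @ w)"

definition R_rels :: "(letter list \<Rightarrow> 'a::comm_ring_1) set" where
  "R_rels = {(\<lambda>c. vec [D,D,U] c + vec [U,D,D] c), (\<lambda>c. vec [D,U,U] c + vec [U,U,D] c)}"

text \<open>R = k<u,d> / I_R\<close>
definition I_R :: "(letter list \<Rightarrow> 'a::comm_ring_1) set" where
  "I_R = ideal_gen free_mult UNIV R_rels"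

section \<open>The skew group algebra (k<u,d> # kG) and R # kG, G = Z_n = <g>, g^j ~ j mod n\<close>

definition cnt :: "letter \<Rightarrow> letter list \<Rightarrow> nat" where
  "cnt a w = length (filter (\<lambda>x. x = a) w)"

text \<open>g^j(w) = act_coeff xi j w * w, since g(u) = xi u, g(d) = xi^-1 d.\<close>
definition act_coeff :: "'a::field \<Rightarrow> nat \<Rightarrow> letter list \<Rightarrow> 'a" where
  "act_coeff \<xi> j w = \<xi> ^ (j * cnt U w) * (inverse \<xi>) ^ (j * cnt D w)"

definition skew_mult :: "nat \<Rightarrow> 'a::field \<Rightarrow> (letter list \<times> nat) \<Rightarrow> (letter list \<times> nat) \<Rightarrow> ('a \<times> (letter list \<times> nat)) option" where
  "skew_mult n \<xi> p q = Some (act_coeff \<xi> (snd p) (fst q), (fst p @ fst q, (snd p + snd q) mod n))"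

definition smul :: "nat \<Rightarrow> 'a::field \<Rightarrow> (letter list \<times> nat \<Rightarrow> 'a) \<Rightarrow> (letter list \<times> nat \<Rightarrow> 'a) \<Rightarrow> (letter list \<times> nat \<Rightarrow> 'a)" where
  "smul n \<xi> = conv (skew_mult n \<xi>)"

text \<open>carrier of k<u,d> # kG (group index j < n)\<close>
definition SG :: "nat \<Rightarrow> (letter list \<times> nat \<Rightarrow> 'a::zero) set" where
  "SG n = {x. finite (supp x) \<and> (\<forall>w j. x (w, j) \<noteq> 0 \<longrightarrow> j < n)}"

text \<open>R # kG = R (x) kG = (k<u,d> (x) kG) / (I_R (x) kG)\<close>
definition J_skew :: "(letter list \<times> nat \<Rightarrow> 'a::comm_ring_1) set" where
  "J_skew = {x. \<forall>j. (\<lambda>w. x (w, j)) \<in> I_R}"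

definition tens :: "(letter list \<Rightarrow> 'a::times) \<Rightarrow> (nat \<Rightarrow> 'a) \<Rightarrow> (letter list \<times> nat \<Rightarrow> 'a)" where
  "tens r h = (\<lambda>(w, j). r w * h j)"

definition fG :: "nat \<Rightarrow> 'a::field \<Rightarrow> nat \<Rightarrow> nat \<Rightarrow> 'a" where
  "fG n \<xi> i = (\<lambda>j. if j < n then \<xi> ^ (i * j) / of_nat n else 0)"

definition fsumG :: "nat \<Rightarrow> 'a::field \<Rightarrow> nat \<Rightarrow> 'a" where
  "fsumG n \<xi> = (\<lambda>j. \<Sum>i<n. fG n \<xi> i j)"

definition fi :: "nat \<Rightarrow> 'a::field \<Rightarrow> nat \<Rightarrow> (letter list \<times> nat \<Rightarrow> 'a)" where
  "fi n \<xi> i = tens (vec []) (fG n \<xi> i)"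

definition ff :: "nat \<Rightarrow> 'a::field \<Rightarrow> (letter list \<times> nat \<Rightarrow> 'a)" where
  "ff n \<xi> = tens (vec []) (fsumG n \<xi>)"

definition u_f :: "nat \<Rightarrow> 'a::field \<Rightarrow> (letter list \<times> nat \<Rightarrow> 'a)" where
  "u_f n \<xi> = tens (vec [U]) (fsumG n \<xi>)"

definition d_f :: "nat \<Rightarrow> 'a::field \<Rightarrow> (letter list \<times> nat \<Rightarrow> 'a)" where
  "d_f n \<xi> = tens (vec [D]) (fsumG n \<xi>)"

definition one_skew :: "(letter list \<times> nat \<Rightarrow> 'a::{zero,one})" where
  "one_skew = vec ([], 0)"

text \<open>A path is (start vertex, list of arrows), U = some u_i, D = some d_i.\<close>
definition step :: "nat \<Rightarrow> nat \<Rightarrow> letter \<Rightarrow> nat" where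
  "step n i a = (case a of U \<Rightarrow> (i + 1) mod n | D \<Rightarrow> (i + n - 1) mod n)"

definition end_v :: "nat \<Rightarrow> nat \<Rightarrow> letter list \<Rightarrow> nat" where
  "end_v n i v = foldl (step n) i v"

definition path_mult :: "nat \<Rightarrow> (nat \<times> letter list) \<Rightarrow> (nat \<times> letter list) \<Rightarrow> ('a::comm_ring_1 \<times> (nat \<times> letter list)) option" where
  "path_mult n p q = (if end_v n (fst p) (snd p) = fst q then Some (1, (fst p, snd p @ snd q)) else None)"

definition PQ :: "nat \<Rightarrow> (nat \<times> letter list \<Rightarrow> 'a::zero) set" where
  "PQ n = {x. finite (supp x) \<and> (\<forall>i w. x (i, w) \<noteq> 0 \<longrightarrow> i < n)}"

definition H_rels :: "nat \<Rightarrow> (nat \<Rightarrow> 'a) \<Rightarrow> (nat \<Rightarrow> 'a) \<Rightarrow> (nat \<times> letter list \<Rightarrow> 'a::comm_ring_1) set" where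
  "H_rels n \<alpha> \<beta> =
     {(\<lambda>c. vec (i, [D,U,U]) c - \<alpha> i * vec (i, [U,D,U]) c - \<beta> i * vec (i, [U,U,D]) c) | i. i < n}
   \<union> {(\<lambda>c. vec ((i+1) mod n, [D,D,U]) c - \<alpha> i * vec ((i+1) mod n, [D,U,D]) c
              - \<beta> i * vec ((i+1) mod n, [U,D,D]) c) | i. i < n}"

definition H_ideal :: "nat \<Rightarrow> (nat \<Rightarrow> 'a) \<Rightarrow> (nat \<Rightarrow> 'a) \<Rightarrow> (nat \<times> letter list \<Rightarrow> 'a::comm_ring_1) set" where
  "H_ideal n \<alpha> \<beta> = ideal_gen (path_mult n) {p. fst p < n} (H_rels n \<alpha> \<beta>)"

definition arrow_img :: "nat \<Rightarrow> 'a::field \<Rightarrow> nat \<Rightarrow> letter \<Rightarrow> (letter list \<times> nat \<Rightarrow> 'a)" where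
  "arrow_img n \<xi> i a = (case a of
      U \<Rightarrow> smul n \<xi> (fi n \<xi> i) (u_f n \<xi>)
    | D \<Rightarrow> smul n \<xi> (d_f n \<xi>) (fi n \<xi> ((i + n - 1) mod n)))"

fun arrows_img :: "nat \<Rightarrow> 'a::field \<Rightarrow> nat \<Rightarrow> letter list \<Rightarrow> (letter list \<times> nat \<Rightarrow> 'a)" where
  "arrows_img n \<xi> i [] = one_skew"
| "arrows_img n \<xi> i (a # w) = smul n \<xi> (arrow_img n \<xi> i a) (arrows_img n \<xi> (step n i a) w)"

definition psi_basis :: "nat \<Rightarrow> 'a::field \<Rightarrow> nat \<times> letter list \<Rightarrow> (letter list \<times> nat \<Rightarrow> 'a)" where
  "psi_basis n \<xi> p = (if snd p = [] then fi n \<xi> (fst p) else arrows_img n \<xi> (fst p) (snd p))"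

definition psi :: "nat \<Rightarrow> 'a::field \<Rightarrow> (nat \<times> letter list \<Rightarrow> 'a) \<Rightarrow> (letter list \<times> nat \<Rightarrow> 'a)" where
  "psi n \<xi> x = (\<lambda>c. \<Sum>b \<in> supp x. x b * psi_basis n \<xi> b c)"

definition primitive_root :: "nat \<Rightarrow> 'a::field \<Rightarrow> bool" where
  "primitive_root n \<xi> \<longleftrightarrow> \<xi> ^ n = 1 \<and> (\<forall>k. 0 < k \<and> k < n \<longrightarrow> \<xi> ^ k \<noteq> 1)"

end

theory Submission
  imports Defs
begin

definition mv :: "('b \<Rightarrow> 'b \<Rightarrow> ('a \<times> 'b) option) \<Rightarrow> 'b \<Rightarrow> 'b \<Rightarrow> 'b \<Rightarrow> 'a::comm_ring_1" where
  "mv m a b c = (case m a b of None \<Rightarrow> 0 | Some (s, z) \<Rightarrow> if z = c then s else 0)"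

definition lin :: "('b \<Rightarrow> 'c \<Rightarrow> 'a::comm_ring_1) \<Rightarrow> ('b \<Rightarrow> 'a) \<Rightarrow> 'c \<Rightarrow> 'a" where
  "lin g x = (\<lambda>c. \<Sum>b \<in> supp x. x b * g b c)"

lemma supp_iff: "b \<in> supp x \<longleftrightarrow> x b \<noteq> 0" by (simp add: supp_def)

lemma conv_alt: "conv m x y c = (\<Sum>p \<in> supp x \<times> supp y. x (fst p) * y (snd p) * mv m (fst p) (snd p) c)"
  unfolding conv_def mv_def
  by (rule sum.cong) (auto split: option.splits)

lemma conv_superset:
  fixes x :: "'b \<Rightarrow> 'a::comm_ring_1"
  assumes "finite S" "finite T" "supp x \<subseteq> S" "supp y \<subseteq> T"
  shows "conv m x y c = (\<Sum>a\<in>S. \<Sum>b\<in>T. x a * y b * mv m a b c)"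
proof -
  have "conv m x y c = (\<Sum>p \<in> S \<times> T. x (fst p) * y (snd p) * mv m (fst p) (snd p) c)"
    unfolding conv_alt
    apply (rule sum.mono_neutral_left)
    using assms by (auto simp: supp_def)
  also have "\<dots> = (\<Sum>a\<in>S. \<Sum>b\<in>T. x a * y b * mv m a b c)"
    by (simp add: sum.cartesian_product case_prod_beta)
  finally show ?thesis .
qed

lemma lin_superset:
  fixes x :: "'b \<Rightarrow> 'a::comm_ring_1"
  assumes "finite B" "supp x \<subseteq> B"
  shows "lin g x c = (\<Sum>b\<in>B. x b * g b c)"
  unfolding lin_def
  apply (rule sum.mono_neutral_left)
  using assms by (auto simp: supp_def)

lemma supp_sum_sub:
  fixes X :: "'i \<Rightarrow> 'b \<Rightarrow> 'a::comm_ring_1"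
  assumes "\<And>a. a \<in> A \<Longrightarrow> supp (X a) \<subseteq> T"
  shows "supp (\<lambda>c. \<Sum>a\<in>A. f a * X a c) \<subseteq> T"
proof
  fix c assume c: "c \<in> supp (\<lambda>c. \<Sum>a\<in>A. f a * X a c)"
  show "c \<in> T"
  proof (rule ccontr)
    assume "c \<notin> T"
    then have "\<And>a. a \<in> A \<Longrightarrow> X a c = 0" using assms by (auto simp: supp_def)
    then have "(\<Sum>a\<in>A. f a * X a c) = 0" by simp
    then show False using c by (simp add: supp_def)
  qed
qed

lemma lin_sum:
  fixes X :: "'i \<Rightarrow> 'b \<Rightarrow> 'a::comm_ring_1"
  assumes "finite A" "finite T" "\<And>a. a \<in> A \<Longrightarrow> supp (X a) \<subseteq> T"
  shows "lin g (\<lambda>c. \<Sum>a\<in>A. f a * X a c) c = (\<Sum>a\<in>A. f a * lin g (X a) c)"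
proof -
  have "lin g (\<lambda>c. \<Sum>a\<in>A. f a * X a c) c = (\<Sum>t\<in>T. (\<Sum>a\<in>A. f a * X a t) * g t c)"
    by (rule lin_superset[OF assms(2) supp_sum_sub[OF assms(3)]])
  also have "\<dots> = (\<Sum>a\<in>A. f a * (\<Sum>t\<in>T. X a t * g t c))"
    by (simp add: sum_distrib_left sum_distrib_right mult_ac sum.swap[of _ T])
  also have "\<dots> = (\<Sum>a\<in>A. f a * lin g (X a) c)"
    by (rule sum.cong) (simp_all add: lin_superset[OF assms(2) assms(3)])
  finally show ?thesis .
qed

lemma sum4_swap: "(\<Sum>s\<in>S. \<Sum>t\<in>T. \<Sum>a\<in>A. \<Sum>b\<in>B. F s t a b) = (\<Sum>a\<in>A. \<Sum>b\<in>B. \<Sum>s\<in>S. \<Sum>t\<in>T. F s t a b)"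
proof -
  have "(\<Sum>s\<in>S. \<Sum>t\<in>T. \<Sum>a\<in>A. \<Sum>b\<in>B. F s t a b) = (\<Sum>s\<in>S. \<Sum>a\<in>A. \<Sum>t\<in>T. \<Sum>b\<in>B. F s t a b)"
    by (rule sum.cong[OF refl], rule sum.swap)
  also have "\<dots> = (\<Sum>a\<in>A. \<Sum>s\<in>S. \<Sum>t\<in>T. \<Sum>b\<in>B. F s t a b)"
    by (rule sum.swap)
  also have "\<dots> = (\<Sum>a\<in>A. \<Sum>s\<in>S. \<Sum>b\<in>B. \<Sum>t\<in>T. F s t a b)"
    by (rule sum.cong[OF refl], rule sum.cong[OF refl], rule sum.swap)
  also have "\<dots> = (\<Sum>a\<in>A. \<Sum>b\<in>B. \<Sum>s\<in>S. \<Sum>t\<in>T. F s t a b)"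
    by (rule sum.cong[OF refl], rule sum.swap)
  finally show ?thesis .
qed

lemma conv_bilin:
  fixes X :: "'i \<Rightarrow> 'b \<Rightarrow> 'a::comm_ring_1"
  assumes "finite A" "finite B" "finite S" "finite T"
    "\<And>a. a \<in> A \<Longrightarrow> supp (X a) \<subseteq> S" "\<And>b. b \<in> B \<Longrightarrow> supp (Y b) \<subseteq> T"
  shows "conv m (\<lambda>c. \<Sum>a\<in>A. f a * X a c) (\<lambda>c. \<Sum>b\<in>B. g b * Y b c) c
       = (\<Sum>a\<in>A. \<Sum>b\<in>B. f a * g b * conv m (X a) (Y b) c)"
proof -
  have "conv m (\<lambda>c. \<Sum>a\<in>A. f a * X a c) (\<lambda>c. \<Sum>b\<in>B. g b * Y b c) c
     = (\<Sum>s\<in>S. \<Sum>t\<in>T. (\<Sum>a\<in>A. f a * X a s) * (\<Sum>b\<in>B. g b * Y b t) * mv m s t c)"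
    by (rule conv_superset[OF assms(3,4) supp_sum_sub supp_sum_sub]) (use assms in auto)
  also have "\<dots> = (\<Sum>s\<in>S. \<Sum>t\<in>T. \<Sum>a\<in>A. \<Sum>b\<in>B. f a * g b * (X a s * Y b t * mv m s t c))"
    by (simp add: sum_distrib_left sum_distrib_right mult_ac sum.swap[of _ A])
  also have "\<dots> = (\<Sum>a\<in>A. \<Sum>b\<in>B. \<Sum>s\<in>S. \<Sum>t\<in>T. f a * g b * (X a s * Y b t * mv m s t c))"
    by (rule sum4_swap)
  also have "\<dots> = (\<Sum>a\<in>A. \<Sum>b\<in>B. f a * g b * conv m (X a) (Y b) c)"
    apply (rule sum.cong, rule refl, rule sum.cong, rule refl)
    apply (subst conv_superset[OF assms(3,4)])
    using assms by (auto simp: sum_distrib_left)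
  finally show ?thesis .
qed

lemma expand:
  fixes x :: "'b \<Rightarrow> 'a::comm_ring_1"
  assumes "finite (supp x)"
  shows "x = (\<lambda>c. \<Sum>b\<in>supp x. x b * vec b c)"
proof
  fix c
  have "(\<Sum>b\<in>supp x. x b * vec b c) = (\<Sum>b\<in>supp x. if b = c then x c else 0)"
    by (rule sum.cong) (auto simp: vec_def)
  also have "\<dots> = x c" using assms by (auto simp: supp_def)
  finally show "x c = (\<Sum>b\<in>supp x. x b * vec b c)" by simp
qed

lemma supp_vec: "supp (vec b :: _ \<Rightarrow> 'a::zero_neq_one) = {b}"
  by (auto simp: supp_def vec_def)

lemma lin_vec: "lin g (vec b :: _ \<Rightarrow> 'a::comm_ring_1) = g b"
  unfolding lin_def supp_vec by (rule ext) (simp add: vec_def)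

lemma lin_zero: "lin g (\<lambda>_. 0) = (\<lambda>_. 0)"
  by (simp add: lin_def supp_def)

lemma conv_finite: "finite (supp (conv m x y))"
proof (cases "finite (supp x \<times> supp y)")
  case True
  have "supp (conv m x y) \<subseteq> (\<lambda>p. case m (fst p) (snd p) of None \<Rightarrow> undefined | Some (s, z) \<Rightarrow> z) ` (supp x \<times> supp y)"
  proof
    fix c assume c: "c \<in> supp (conv m x y)"
    show "c \<in> (\<lambda>p. case m (fst p) (snd p) of None \<Rightarrow> undefined | Some (s, z) \<Rightarrow> z) ` (supp x \<times> supp y)"
    proof (rule ccontr)
      assume nc: "c \<notin> (\<lambda>p. case m (fst p) (snd p) of None \<Rightarrow> undefined | Some (s, z) \<Rightarrow> z) ` (supp x \<times> supp y)"
      have "conv m x y c = 0" unfolding conv_alt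
        apply (rule sum.neutral)
        using nc by (force simp: mv_def split: option.splits)
      then show False using c by (simp add: supp_def)
    qed
  qed
  then show ?thesis using True finite_subset by blast
next
  case False
  then have "conv m x y = (\<lambda>_. 0)" by (simp add: conv_def)
  then show ?thesis by (simp add: supp_def)
qed

lemma conv_vec_left: "finite (supp (y::'b \<Rightarrow> 'a::comm_ring_1)) \<Longrightarrow> conv m (vec a) y c = (\<Sum>b\<in>supp y. y b * mv m a b c)"
  by (subst conv_superset[of "{a}" "supp y"]) (simp_all add: supp_vec, simp add: vec_def)

lemma conv_vec_right: "finite (supp (x::'b \<Rightarrow> 'a::comm_ring_1)) \<Longrightarrow> conv m x (vec a) c = (\<Sum>b\<in>supp x. x b * mv m b a c)"
  by (subst conv_superset[of "supp x" "{a}"]) (simp_all add: supp_vec, simp add: vec_def)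

lemma conv_vec_vec: "conv m (vec a :: 'b \<Rightarrow> 'a::comm_ring_1) (vec b) c = mv m a b c"
  by (subst conv_superset[of "{a}" "{b}"]) (simp_all add: supp_vec, simp add: vec_def)

lemma sum_single: "finite S \<Longrightarrow> supp (x::'b \<Rightarrow> 'a::comm_ring_1) \<subseteq> S \<Longrightarrow> (\<Sum>b\<in>S. x b * (if b = b0 then 1 else 0)) = x b0"
  by (cases "b0 \<in> S") (auto simp: supp_def if_distrib cong: if_cong)

definition deg :: "letter list \<Rightarrow> int" where
  "deg w = int (cnt U w) - int (cnt D w)"

lemma deg_simps[simp]: "deg [] = 0" "deg (U # w) = deg w + 1" "deg (D # w) = deg w - 1"
  "deg (v @ w) = deg v + deg w"
  by (auto simp: deg_def cnt_def)

definition Ew :: "nat \<Rightarrow> 'a::field \<Rightarrow> letter list \<Rightarrow> nat \<Rightarrow> letter list \<times> nat \<Rightarrow> 'a" where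
  "Ew n \<xi> w k = (\<lambda>(v, j). if v = w then fG n \<xi> k j else 0)"

definition st :: "nat \<Rightarrow> nat \<Rightarrow> letter list \<Rightarrow> nat" where
  "st n k w = nat ((int k - deg w) mod int n)"

lemma sum_single_prod: "sum f ({w} \<times> A) = (\<Sum>j\<in>A. f (w, j))"
  by (rule sum.reindex_cong[of "\<lambda>j. (w, j)"]) (auto simp: inj_on_def)

lemma end_append: "end_v n i (v @ w) = end_v n (end_v n i v) w"
  by (simp add: end_v_def)

lemma end_Cons: "end_v n i (a # w) = end_v n (step n i a) w"
  by (simp add: end_v_def)

lemma end_Nil[simp]: "end_v n i [] = i"
  by (simp add: end_v_def)

locale lsetup =
  fixes n :: nat and \<xi> :: "'a::field_char_0"
  assumes n2: "2 \<le> n" and prim: "primitive_root n \<xi>"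
begin

lemma npos: "0 < n" using n2 by simp
lemma xin: "\<xi> ^ n = 1" using prim by (simp add: primitive_root_def)
lemma xinz: "\<xi> \<noteq> 0" using xin npos by (metis power_0_left less_not_refl3 zero_neq_one)
lemma nnz: "(of_nat n :: 'a) \<noteq> 0" using npos by simp

abbreviation X :: "int \<Rightarrow> 'a" where "X e \<equiv> \<xi> powi e"

lemma X_add: "X (a + b) = X a * X b" by (simp add: power_int_add xinz)
lemma X_n: "X (int n * k) = 1" by (simp add: power_int_mult xin)
lemma X_mod: "X (e mod int n) = X e"
proof -
  have "X e = X (e mod int n + int n * (e div int n))" by simp
  also have "\<dots> = X (e mod int n)" by (simp only: X_add X_n) simp
  finally show ?thesis by simp
qed
lemma X_cong: "a mod int n = b mod int n \<Longrightarrow> X a = X b" by (metis X_mod)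
lemma inv_pow_X: "inverse \<xi> ^ m = X (- int m)"
  by (simp add: power_int_minus power_inverse)

lemma X_ne1: assumes "e mod int n \<noteq> 0" shows "X e \<noteq> 1"
proof -
  have "X e = X (e mod int n)" by (simp add: X_mod)
  also have "\<dots> = \<xi> ^ nat (e mod int n)" using npos
    by (metis of_nat_0_less_iff pos_mod_sign power_int_of_nat int_nat_eq)
  finally have 1: "X e = \<xi> ^ nat (e mod int n)" .
  have "0 \<le> e mod int n" using npos by simp
  then have "0 < nat (e mod int n)" using assms by simp
  moreover have "nat (e mod int n) < n" using npos by (simp add: nat_less_iff)
  ultimately have "0 < nat (e mod int n)" "nat (e mod int n) < n" by auto
  then show ?thesis using prim 1 by (simp add: primitive_root_def)
qed

lemma ortho: "(\<Sum>j<n. X (int j * e)) = (if e mod int n = 0 then of_nat n else 0)"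
proof (cases "e mod int n = 0")
  case True
  have "\<And>j. X (int j * e) = 1"
  proof -
    fix j
    have "(int j * e) mod int n = (int j * (e mod int n)) mod int n" by (simp add: mod_mult_right_eq)
    then have "X (int j * e) = X 0" using True by (intro X_cong) simp
    then show "X (int j * e) = 1" by simp
  qed
  then show ?thesis using True by simp
next
  case False
  have ne: "X e \<noteq> 1" using X_ne1[OF False] .
  have "(\<Sum>j<n. X (int j * e)) = (\<Sum>j<n. X e ^ j)"
    by (rule sum.cong) (simp_all add: power_int_mult mult.commute)
  also have "\<dots> = (X e ^ n - 1) / (X e - 1)" using geometric_sum[OF ne] .
  also have "X e ^ n = 1"
    by (metis X_n power_int_mult power_int_of_nat mult.commute)
  finally show ?thesis using False by simp
qed

lemma act_X: "act_coeff \<xi> j w = X (int j * deg w)"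
  unfolding act_coeff_def inv_pow_X deg_def
  by (simp add: X_add[symmetric] algebra_simps flip: power_int_of_nat)

lemma fG_X: "fG n \<xi> k j = (if j < n then X (int k * int j) / of_nat n else 0)"
  by (simp add: fG_def flip: power_int_of_nat)

lemma fG_mod: "fG n \<xi> (k mod n) = fG n \<xi> k"
proof
  fix j
  have "X (int (k mod n) * int j) = X (int k * int j)"
    by (rule X_cong) (simp add: zmod_int mod_mult_left_eq)
  then show "fG n \<xi> (k mod n) j = fG n \<xi> k j" by (simp add: fG_X)
qed

lemma fsumG_eq: "fsumG n \<xi> j = (if j = 0 then 1 else 0)"
proof (cases "j < n")
  case True
  have "fsumG n \<xi> j = (\<Sum>i<n. X (int i * int j)) / of_nat n"
    using True by (simp add: fsumG_def fG_X sum_divide_distrib)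
  also have "\<dots> = (if int j mod int n = 0 then 1 else 0)" using nnz by (simp add: ortho)
  also have "(int j mod int n = 0) = (j = 0)" using True by simp
  finally show ?thesis by simp
next
  case False
  then show ?thesis using npos by (simp add: fsumG_def fG_def)
qed

lemma tens_vec: "tens (vec w) (fsumG n \<xi>) = vec (w, 0)"
  by (rule ext) (auto simp: tens_def fsumG_eq vec_def split: if_splits)

lemma ff_eq: "ff n \<xi> = vec ([], 0)" by (simp add: ff_def tens_vec)
lemma uf_eq: "u_f n \<xi> = vec ([U], 0)" by (simp add: u_f_def tens_vec)
lemma df_eq: "d_f n \<xi> = vec ([D], 0)" by (simp add: d_f_def tens_vec)
lemma fi_eq: "fi n \<xi> i = Ew n \<xi> [] i"
  by (rule ext) (auto simp: fi_def Ew_def tens_def vec_def)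

lemma end_eq: "i < n \<Longrightarrow> end_v n i w = nat ((int i + deg w) mod int n)"
proof (induction w arbitrary: i)
  case Nil
  then show ?case by simp
next
  case (Cons a w)
  show ?case
  proof (cases a)
    case U
    have s: "step n i a = (i + 1) mod n" using U by (simp add: step_def)
    have "end_v n i (a # w) = nat ((int ((i + 1) mod n) + deg w) mod int n)"
      using Cons.IH[of "(i+1) mod n"] npos by (simp add: end_Cons s)
    also have "\<dots> = nat ((int i + deg (a # w)) mod int n)"
      using U by (simp add: zmod_int mod_add_left_eq mod_add_right_eq algebra_simps)
    finally show ?thesis .
  next
    case D
    have s: "step n i a = (i + n - 1) mod n" using D by (simp add: step_def)
    have "end_v n i (a # w) = nat ((int ((i + n - 1) mod n) + deg w) mod int n)"
      using Cons.IH[of "(i + n - 1) mod n"] npos by (simp add: end_Cons s)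
    also have "int ((i + n - 1) mod n) = (int i - 1 + int n) mod int n"
    proof -
      have "int ((i + n - 1) mod n) = (int i + int n - 1) mod int n" using npos by (simp add: zmod_int of_nat_diff)
      also have "int i + int n - 1 = (int i - 1) + int n" by simp
      finally show ?thesis by (simp only: mod_add_self2)
    qed
    also have "nat (((int i - 1 + int n) mod int n + deg w) mod int n) = nat ((int i + deg (a # w)) mod int n)"
    proof -
      have "((int i - 1 + int n) mod int n + deg w) mod int n = (int i - 1 + int n + deg w) mod int n"
        by (rule mod_add_left_eq)
      also have "int i - 1 + int n + deg w = (int i + deg (a # w)) + int n" using D by simp
      finally show ?thesis by (simp only: mod_add_self2)
    qed
    finally show ?thesis .
  qed
qed

lemma end_lt: "i < n \<Longrightarrow> end_v n i w < n"
  using npos by (simp add: end_eq nat_less_iff)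

lemma st_lt: "st n k w < n"
  using npos by (simp add: st_def nat_less_iff)

lemma end_st: "k < n \<Longrightarrow> end_v n (st n k w) w = k"
proof -
  assume k: "k < n"
  have "end_v n (st n k w) w = nat ((int (st n k w) + deg w) mod int n)" by (rule end_eq[OF st_lt])
  also have "int (st n k w) = (int k - deg w) mod int n" using npos by (simp add: st_def)
  also have "nat (((int k - deg w) mod int n + deg w) mod int n) = nat (int k mod int n)"
    by (simp add: mod_add_left_eq)
  also have "\<dots> = k" using k by simp
  finally show ?thesis .
qed

lemma st_end: "i < n \<Longrightarrow> st n (end_v n i w) w = i"
proof -
  assume i: "i < n"
  have "int (end_v n i w) = (int i + deg w) mod int n" using i npos by (simp add: end_eq)
  then have "st n (end_v n i w) w = nat (((int i + deg w) mod int n - deg w) mod int n)"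
    by (simp add: st_def)
  also have "\<dots> = nat (int i mod int n)" by (simp add: mod_diff_left_eq)
  also have "\<dots> = i" using i by simp
  finally show ?thesis .
qed

lemma st_iff: "i < n \<Longrightarrow> k < n \<Longrightarrow> (st n k w = i) = (end_v n i w = k)"
  using end_st st_end by metis

end

context lsetup begin

lemma mv_skew: "mv (skew_mult n \<xi>) (v, j) (w, k) c = (if c = (v @ w, (j + k) mod n) then X (int j * deg w) else 0)"
  by (auto simp: mv_def skew_mult_def act_X)

lemma supp_Ew: "supp (Ew n \<xi> w a) \<subseteq> {w} \<times> {..<n}"
  by (auto simp: supp_def Ew_def fG_def split: if_splits)

lemma inner_sum:
  assumes j: "j < n" and l: "l < n"
  shows "(\<Sum>k<n. if l = (j + k) mod n then g k else 0) = g (nat ((int l - int j) mod int n))"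
proof -
  define k0 where "k0 = nat ((int l - int j) mod int n)"
  have ik0: "int k0 = (int l - int j) mod int n" using npos by (simp add: k0_def)
  have iff: "(l = (j + k) mod n) = (k = k0)" if k: "k < n" for k
  proof
    assume h: "l = (j + k) mod n"
    then have "int l = (int j + int k) mod int n" by (simp add: zmod_int)
    then have "(int l - int j) mod int n = ((int j + int k) mod int n - int j) mod int n" by simp
    also have "\<dots> = int k mod int n" by (simp add: mod_diff_left_eq)
    also have "\<dots> = int k" using k by simp
    finally show "k = k0" using ik0 by simp
  next
    assume h: "k = k0"
    have "int ((j + k) mod n) = (int j + int k0) mod int n" using h by (simp add: zmod_int)
    also have "\<dots> = (int j + (int l - int j)) mod int n" unfolding ik0 by (simp add: mod_add_right_eq)
    also have "\<dots> = int l" using l by simp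
    finally show "l = (j + k) mod n" by simp
  qed
  have "(\<Sum>k<n. if l = (j + k) mod n then g k else 0) = (\<Sum>k<n. if k = k0 then g k else 0)"
    by (rule sum.cong) (auto simp: iff)
  also have "\<dots> = g k0" using npos by (simp add: k0_def nat_less_iff)
  finally show ?thesis by (simp add: k0_def)
qed

lemma E_mult: "smul n \<xi> (Ew n \<xi> w a) (Ew n \<xi> w' b) =
   (if (int a + deg w') mod int n = int b mod int n then Ew n \<xi> (w @ w') b else (\<lambda>_. 0))"
proof
  fix c :: "letter list \<times> nat"
  obtain v l where c: "c = (v, l)" by force
  have "smul n \<xi> (Ew n \<xi> w a) (Ew n \<xi> w' b) c
     = (\<Sum>s\<in>{w} \<times> {..<n}. \<Sum>t\<in>{w'} \<times> {..<n}. Ew n \<xi> w a s * Ew n \<xi> w' b t * mv (skew_mult n \<xi>) s t c)"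
    unfolding smul_def by (rule conv_superset) (simp_all add: supp_Ew)
  also have "\<dots> = (\<Sum>j<n. \<Sum>k<n. fG n \<xi> a j * fG n \<xi> b k * mv (skew_mult n \<xi>) (w, j) (w', k) c)"
    by (simp add: sum_single_prod Ew_def)
  finally have S: "smul n \<xi> (Ew n \<xi> w a) (Ew n \<xi> w' b) c = (\<Sum>j<n. \<Sum>k<n. fG n \<xi> a j * fG n \<xi> b k * mv (skew_mult n \<xi>) (w, j) (w', k) c)" .
  show "smul n \<xi> (Ew n \<xi> w a) (Ew n \<xi> w' b) c =
     (if (int a + deg w') mod int n = int b mod int n then Ew n \<xi> (w @ w') b else (\<lambda>_. 0)) c"
  proof (cases "v = w @ w' \<and> l < n")
    case False
    have "\<And>j k. mv (skew_mult n \<xi>) (w, j) (w', k) c = 0"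
      using False npos by (auto simp: mv_skew c)
    then have z: "smul n \<xi> (Ew n \<xi> w a) (Ew n \<xi> w' b) c = 0" unfolding S by simp
    show ?thesis using False z by (auto simp: c Ew_def fG_def)
  next
    case True
    then have v: "v = w @ w'" and l: "l < n" by auto
    define e where "e = int a + deg w' - int b"
    have "smul n \<xi> (Ew n \<xi> w a) (Ew n \<xi> w' b) c
       = (\<Sum>j<n. \<Sum>k<n. if l = (j + k) mod n then (X (int a * int j) / of_nat n * X (int j * deg w')) * (X (int b * int k) / of_nat n) else 0)"
      unfolding S by (rule sum.cong[OF refl], rule sum.cong[OF refl]) (auto simp: mv_skew c v fG_X)
    also have "\<dots> = (\<Sum>j<n. (X (int a * int j) / of_nat n * X (int j * deg w')) * (X (int b * int (nat ((int l - int j) mod int n))) / of_nat n))"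
      by (rule sum.cong[OF refl]) (rule inner_sum, simp_all add: l)
    also have "\<dots> = (\<Sum>j<n. X (int b * int l) / (of_nat n * of_nat n) * X (int j * e))"
    proof (rule sum.cong[OF refl])
      fix j assume "j \<in> {..<n}"
      have "X (int b * int (nat ((int l - int j) mod int n))) = X (int b * (int l - int j))"
        using npos by (intro X_cong) (simp add: mod_mult_right_eq)
      moreover have "X (int a * int j) * X (int j * deg w') * X (int b * (int l - int j)) = X (int b * int l) * X (int j * e)"
        by (simp only: X_add[symmetric]) (simp add: e_def algebra_simps)
      ultimately show "(X (int a * int j) / of_nat n * X (int j * deg w')) * (X (int b * int (nat ((int l - int j) mod int n))) / of_nat n)
          = X (int b * int l) / (of_nat n * of_nat n) * X (int j * e)"
        by (simp add: field_simps)
    qed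
    also have "\<dots> = X (int b * int l) / (of_nat n * of_nat n) * (if e mod int n = 0 then of_nat n else 0)"
      by (simp only: sum_distrib_left[symmetric] ortho)
    also have "(e mod int n = 0) = ((int a + deg w') mod int n = int b mod int n)"
      by (simp add: e_def mod_eq_dvd_iff dvd_eq_mod_eq_0)
    finally show ?thesis using nnz by (auto simp: c v l Ew_def fG_X)
  qed
qed

lemma one_left: assumes "y \<in> SG n" shows "smul n \<xi> one_skew y = y"
proof
  fix c
  have f: "finite (supp y)" using assms by (simp add: SG_def)
  have "smul n \<xi> one_skew y c = (\<Sum>t\<in>supp y. y t * mv (skew_mult n \<xi>) ([], 0) t c)"
    unfolding smul_def one_skew_def by (rule conv_vec_left[OF f])
  also have "\<dots> = (\<Sum>t\<in>supp y. y t * (if t = c then 1 else 0))"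
  proof (rule sum.cong[OF refl])
    fix t assume t: "t \<in> supp y"
    obtain w j where tt: "t = (w, j)" by force
    have "j < n" using assms t tt by (auto simp: SG_def supp_def)
    then show "y t * mv (skew_mult n \<xi>) ([], 0) t c = y t * (if t = c then 1 else 0)"
      by (auto simp: tt mv_skew)
  qed
  also have "\<dots> = y c" by (rule sum_single[OF f]) simp
  finally show "smul n \<xi> one_skew y c = y c" .
qed

lemma one_right: assumes "y \<in> SG n" shows "smul n \<xi> y one_skew = y"
proof
  fix c
  have f: "finite (supp y)" using assms by (simp add: SG_def)
  have "smul n \<xi> y one_skew c = (\<Sum>t\<in>supp y. y t * mv (skew_mult n \<xi>) t ([], 0) c)"
    unfolding smul_def one_skew_def by (rule conv_vec_right[OF f])
  also have "\<dots> = (\<Sum>t\<in>supp y. y t * (if t = c then 1 else 0))"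
  proof (rule sum.cong[OF refl])
    fix t assume t: "t \<in> supp y"
    obtain w j where tt: "t = (w, j)" by force
    have "j < n" using assms t tt by (auto simp: SG_def supp_def)
    then show "y t * mv (skew_mult n \<xi>) t ([], 0) c = y t * (if t = c then 1 else 0)"
      by (auto simp: tt mv_skew)
  qed
  also have "\<dots> = y c" by (rule sum_single[OF f]) simp
  finally show "smul n \<xi> y one_skew c = y c" .
qed

lemma Ew_SG: "Ew n \<xi> w k \<in> SG n"
  using supp_Ew[of w k] finite_subset[OF supp_Ew]
  by (auto simp: SG_def supp_def)

lemma arrow_E: assumes i: "i < n" shows "arrow_img n \<xi> i a = Ew n \<xi> [a] (step n i a)"
proof (cases a)
  case U
  show ?thesis
  proof
    fix c :: "letter list \<times> nat"
    obtain v l where c: "c = (v, l)" by force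
    have "arrow_img n \<xi> i a c = smul n \<xi> (Ew n \<xi> [] i) (vec ([U], 0)) c"
      using U by (simp add: arrow_img_def fi_eq uf_eq)
    also have "\<dots> = (\<Sum>s\<in>{[]} \<times> {..<n}. \<Sum>t\<in>{([U], 0)}. Ew n \<xi> [] i s * vec ([U], 0) t * mv (skew_mult n \<xi>) s t c)"
      unfolding smul_def by (rule conv_superset) (simp_all add: supp_Ew supp_vec)
    also have "\<dots> = (\<Sum>j<n. fG n \<xi> i j * (if c = ([U], j) then X (int j) else 0))"
      by (simp add: sum_single_prod Ew_def vec_def mv_skew cong: if_cong)
    also have "\<dots> = Ew n \<xi> [a] (step n i a) c"
    proof (cases "v = [U] \<and> l < n")
      case True
      have "(\<Sum>j<n. fG n \<xi> i j * (if c = ([U], j) then X (int j) else 0)) = fG n \<xi> i l * X (int l)"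
        using True by (simp add: c if_distrib[of "\<lambda>x. _ * x"] cong: if_cong)
      also have "\<dots> = fG n \<xi> (i + 1) l"
        using True by (simp add: fG_X X_add algebra_simps)
      also have "\<dots> = fG n \<xi> (step n i a) l" using U by (simp add: step_def fG_mod)
      finally show ?thesis using True U by (simp add: c Ew_def)
    next
      case False
      then show ?thesis using U by (auto simp: c Ew_def fG_def)
    qed
    finally show "arrow_img n \<xi> i a c = Ew n \<xi> [a] (step n i a) c" .
  qed
next
  case D
  show ?thesis
  proof
    fix c :: "letter list \<times> nat"
    obtain v l where c: "c = (v, l)" by force
    define k where "k = (i + n - 1) mod n"
    have "arrow_img n \<xi> i a c = smul n \<xi> (vec ([D], 0)) (Ew n \<xi> [] k) c"
      using D by (simp add: arrow_img_def fi_eq df_eq k_def)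
    also have "\<dots> = (\<Sum>s\<in>{([D], 0)}. \<Sum>t\<in>{[]} \<times> {..<n}. vec ([D], 0) s * Ew n \<xi> [] k t * mv (skew_mult n \<xi>) s t c)"
      unfolding smul_def by (rule conv_superset) (simp_all add: supp_Ew supp_vec)
    also have "\<dots> = (\<Sum>j<n. fG n \<xi> k j * (if c = ([D], j) then 1 else 0))"
      by (simp add: sum_single_prod Ew_def vec_def mv_skew cong: if_cong)
    also have "\<dots> = Ew n \<xi> [a] (step n i a) c"
    proof (cases "v = [D] \<and> l < n")
      case True
      then show ?thesis using D
        by (simp add: c Ew_def if_distrib[of "\<lambda>x. _ * x"] step_def k_def cong: if_cong)
    next
      case False
      then show ?thesis using D by (auto simp: c Ew_def fG_def)
    qed
    finally show "arrow_img n \<xi> i a c = Ew n \<xi> [a] (step n i a) c" .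
  qed
qed

lemma step_lt: "i < n \<Longrightarrow> step n i a < n"
  using npos by (cases a) (auto simp: step_def)

lemma arrows_E: "i < n \<Longrightarrow> w \<noteq> [] \<Longrightarrow> arrows_img n \<xi> i w = Ew n \<xi> w (end_v n i w)"
proof (induction w arbitrary: i)
  case Nil
  then show ?case by simp
next
  case (Cons a w)
  have s: "step n i a < n" by (rule step_lt[OF Cons.prems(1)])
  show ?case
  proof (cases "w = []")
    case True
    then show ?thesis using Cons.prems
      by (simp add: arrow_E one_right Ew_SG end_Cons)
  next
    case False
    have "arrows_img n \<xi> i (a # w) = smul n \<xi> (Ew n \<xi> [a] (step n i a)) (Ew n \<xi> w (end_v n (step n i a) w))"
      using Cons.IH[OF s False] Cons.prems by (simp add: arrow_E)
    also have "\<dots> = Ew n \<xi> ([a] @ w) (end_v n (step n i a) w)"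
      using s npos by (simp add: E_mult end_eq mod_add_left_eq)
    finally show ?thesis by (simp add: end_Cons)
  qed
qed

lemma psi_basis_E: "fst p < n \<Longrightarrow> psi_basis n \<xi> p = Ew n \<xi> (snd p) (end_v n (fst p) (snd p))"
  by (auto simp: psi_basis_def fi_eq arrows_E)

end

lemma sum_supp_eq:
  assumes "finite A" "finite B" "\<And>a. a \<in> A - B \<Longrightarrow> F a = 0" "\<And>b. b \<in> B - A \<Longrightarrow> F b = 0"
  shows "sum F A = sum F B"
proof -
  have "sum F A = sum F (A \<union> B)" by (rule sum.mono_neutral_left) (use assms in auto)
  moreover have "sum F B = sum F (A \<union> B)" by (rule sum.mono_neutral_left) (use assms in auto)
  ultimately show ?thesis by simp
qed

lemma IG_sum:
  assumes "finite A" "\<And>a. a \<in> A \<Longrightarrow> r a \<in> ideal_gen m B S"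
  shows "(\<lambda>c. \<Sum>a\<in>A. f a * r a c) \<in> ideal_gen m B S"
  using assms
proof (induction A rule: finite_induct)
  case empty
  then show ?case by (simp add: ideal_gen.zero)
next
  case (insert a A)
  have "(\<lambda>c. f a * r a c) \<in> ideal_gen m B S" by (rule ideal_gen.smult) (simp add: insert.prems)
  moreover have "(\<lambda>c. \<Sum>a\<in>A. f a * r a c) \<in> ideal_gen m B S" using insert by simp
  ultimately have "(\<lambda>c. f a * r a c + (\<Sum>a\<in>A. f a * r a c)) \<in> ideal_gen m B S"
    by (rule ideal_gen.add)
  then show ?case using insert by simp
qed

lemma mv_pm: "mv (path_mult n) a b c = (if end_v n (fst a) (snd a) = fst b \<and> c = (fst a, snd a @ snd b) then 1 else 0)"
  by (auto simp: mv_def path_mult_def)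

definition ES :: "nat \<Rightarrow> (nat \<times> letter list \<Rightarrow> 'a) \<Rightarrow> nat \<Rightarrow> letter list \<Rightarrow> 'a" where
  "ES n x k = (\<lambda>w. x (st n k w, w))"

context lsetup begin

lemma psi_lin: "psi n \<xi> x = lin (psi_basis n \<xi>) x"
  by (simp add: psi_def lin_def)

lemma PQ_fin: "x \<in> PQ n \<Longrightarrow> finite (supp x)" by (simp add: PQ_def)
lemma PQ_lt: "x \<in> PQ n \<Longrightarrow> b \<in> supp x \<Longrightarrow> fst b < n"
  by (cases b) (auto simp: PQ_def supp_def)

lemma supp_psi_basis: "fst p < n \<Longrightarrow> supp (psi_basis n \<xi> p) \<subseteq> {snd p} \<times> {..<n}"
  by (simp add: psi_basis_E supp_Ew)

lemma psi_basis_mult: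
  assumes a: "fst a < n" and b: "fst b < n"
  shows "psi n \<xi> (conv (path_mult n) (vec a) (vec b)) = smul n \<xi> (psi_basis n \<xi> a) (psi_basis n \<xi> b)"
proof (cases "end_v n (fst a) (snd a) = fst b")
  case True
  have "conv (path_mult n) (vec a) (vec b) = (vec (fst a, snd a @ snd b) :: _ \<Rightarrow> 'a)"
    using True by (intro ext, simp only: conv_vec_vec mv_pm) (auto simp: vec_def)
  then have "psi n \<xi> (conv (path_mult n) (vec a) (vec b)) = psi n \<xi> (vec (fst a, snd a @ snd b))"
    by simp
  also have "\<dots> = Ew n \<xi> (snd a @ snd b) (end_v n (fst a) (snd a @ snd b))"
    using a by (simp add: psi_lin lin_vec psi_basis_E)
  finally have "psi n \<xi> (conv (path_mult n) (vec a) (vec b)) = Ew n \<xi> (snd a @ snd b) (end_v n (fst a) (snd a @ snd b))" .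
  moreover have "(int (end_v n (fst a) (snd a)) + deg (snd b)) mod int n = int (end_v n (fst b) (snd b)) mod int n"
    using True b npos by (simp add: end_eq)
  ultimately show ?thesis using a b True by (simp add: psi_basis_E E_mult end_append)
next
  case False
  have "conv (path_mult n) (vec a) (vec b) = ((\<lambda>_. 0) :: _ \<Rightarrow> 'a)"
    using False by (auto simp: conv_vec_vec mv_pm)
  then have 1: "psi n \<xi> (conv (path_mult n) (vec a) (vec b)) = (\<lambda>_. 0)"
    by (simp add: psi_lin lin_zero)
  have "(int (end_v n (fst a) (snd a)) + deg (snd b)) mod int n \<noteq> int (end_v n (fst b) (snd b)) mod int n"
  proof
    assume h: "(int (end_v n (fst a) (snd a)) + deg (snd b)) mod int n = int (end_v n (fst b) (snd b)) mod int n"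
    have "int (end_v n (fst b) (snd b)) mod int n = (int (fst b) + deg (snd b)) mod int n"
      using b npos by (simp add: end_eq)
    with h have "int n dvd (int (end_v n (fst a) (snd a)) - int (fst b))"
      by (simp add: mod_eq_dvd_iff)
    then have "int (end_v n (fst a) (snd a)) mod int n = int (fst b) mod int n"
      by (simp add: mod_eq_dvd_iff)
    then show False using False a b end_lt[OF a] by simp
  qed
  then show ?thesis using 1 a b by (simp add: psi_basis_E E_mult)
qed

lemma psi_mult:
  assumes x: "x \<in> PQ n" and y: "y \<in> PQ n"
  shows "psi n \<xi> (conv (path_mult n) x y) = smul n \<xi> (psi n \<xi> x) (psi n \<xi> y)"
proof
  fix c
  define A where "A = supp x"
  define B where "B = supp y"
  have fA: "finite A" and fB: "finite B" using x y by (auto simp: A_def B_def PQ_def)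
  have ltA: "\<And>a. a \<in> A \<Longrightarrow> fst a < n" using x by (auto simp: A_def intro: PQ_lt)
  have ltB: "\<And>b. b \<in> B \<Longrightarrow> fst b < n" using y by (auto simp: B_def intro: PQ_lt)
  define Z where "Z p = (conv (path_mult n) (vec (fst p)) (vec (snd p)) :: nat \<times> letter list \<Rightarrow> 'a)" for p :: "(nat \<times> letter list) \<times> (nat \<times> letter list)"
  define T where "T = (\<lambda>p. (fst (fst p), snd (fst p) @ snd (snd p))) ` (A \<times> B)"
  have cxy: "conv (path_mult n) x y = (\<lambda>c. \<Sum>p\<in>A \<times> B. (x (fst p) * y (snd p)) * Z p c)"
  proof
    fix c
    have "conv (path_mult n) x y c = conv (path_mult n) (\<lambda>c. \<Sum>a\<in>A. x a * vec a c) (\<lambda>c. \<Sum>b\<in>B. y b * vec b c) c"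
      using expand[of x] expand[of y] fA fB by (simp add: A_def B_def)
    also have "\<dots> = (\<Sum>a\<in>A. \<Sum>b\<in>B. x a * y b * conv (path_mult n) (vec a) (vec b) c)"
      by (rule conv_bilin[OF fA fB fA fB]) (simp_all add: supp_vec)
    also have "\<dots> = (\<Sum>p\<in>A \<times> B. (x (fst p) * y (snd p)) * Z p c)"
      by (simp add: sum.cartesian_product Z_def case_prod_beta)
    finally show "conv (path_mult n) x y c = (\<Sum>p\<in>A \<times> B. (x (fst p) * y (snd p)) * Z p c)" .
  qed
  have suppZ: "supp (Z p) \<subseteq> T" if "p \<in> A \<times> B" for p
  proof
    fix c assume "c \<in> supp (Z p)"
    then have "c = (fst (fst p), snd (fst p) @ snd (snd p))"
      by (auto simp: Z_def supp_def conv_vec_vec mv_pm split: if_splits)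
    then show "c \<in> T" using that by (auto simp: T_def)
  qed
  have "psi n \<xi> (conv (path_mult n) x y) c = (\<Sum>p\<in>A \<times> B. (x (fst p) * y (snd p)) * psi n \<xi> (Z p) c)"
    unfolding cxy psi_lin
  proof (rule lin_sum)
    show "finite (A \<times> B)" using fA fB by simp
    show "finite T" using fA fB by (simp add: T_def)
    fix p assume "p \<in> A \<times> B" then show "supp (Z p) \<subseteq> T" by (rule suppZ)
  qed
  also have "\<dots> = (\<Sum>p\<in>A \<times> B. (x (fst p) * y (snd p)) * smul n \<xi> (psi_basis n \<xi> (fst p)) (psi_basis n \<xi> (snd p)) c)"
  proof (rule sum.cong[OF refl])
    fix p assume p: "p \<in> A \<times> B"
    then have "fst p \<in> A" "snd p \<in> B" by auto
    then show "(x (fst p) * y (snd p)) * psi n \<xi> (Z p) c = (x (fst p) * y (snd p)) * smul n \<xi> (psi_basis n \<xi> (fst p)) (psi_basis n \<xi> (snd p)) c"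
      by (simp add: Z_def psi_basis_mult[OF ltA ltB])
  qed
  also have "\<dots> = (\<Sum>a\<in>A. \<Sum>b\<in>B. x a * y b * smul n \<xi> (psi_basis n \<xi> a) (psi_basis n \<xi> b) c)"
    by (simp add: sum.cartesian_product case_prod_beta)
  also have "\<dots> = smul n \<xi> (\<lambda>c. \<Sum>a\<in>A. x a * psi_basis n \<xi> a c) (\<lambda>c. \<Sum>b\<in>B. y b * psi_basis n \<xi> b c) c"
    unfolding smul_def
  proof (rule conv_bilin[symmetric, of _ _ "snd ` A \<times> {..<n}" "snd ` B \<times> {..<n}"])
    show "finite A" "finite B" "finite (snd ` A \<times> {..<n})" "finite (snd ` B \<times> {..<n})" using fA fB by auto
    fix a assume a: "a \<in> A"
    show "supp (psi_basis n \<xi> a) \<subseteq> snd ` A \<times> {..<n}"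
      by (rule order.trans[OF supp_psi_basis[OF ltA[OF a]]]) (use a in auto)
  next
    fix a assume a: "a \<in> B"
    show "supp (psi_basis n \<xi> a) \<subseteq> snd ` B \<times> {..<n}"
      by (rule order.trans[OF supp_psi_basis[OF ltB[OF a]]]) (use a in auto)
  qed
  also have "\<dots> = smul n \<xi> (psi n \<xi> x) (psi n \<xi> y) c"
    by (simp add: psi_def A_def B_def)
  finally show "psi n \<xi> (conv (path_mult n) x y) c = smul n \<xi> (psi n \<xi> x) (psi n \<xi> y) c" .
qed

lemma psi_SG: assumes x: "x \<in> PQ n" shows "psi n \<xi> x \<in> SG n"
proof -
  have sub: "supp (psi n \<xi> x) \<subseteq> snd ` supp x \<times> {..<n}"
    unfolding psi_def
  proof (rule supp_sum_sub)
    fix a assume a: "a \<in> supp x"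
    show "supp (psi_basis n \<xi> a) \<subseteq> snd ` supp x \<times> {..<n}"
      by (rule order.trans[OF supp_psi_basis[OF PQ_lt[OF x a]]]) (use a in auto)
  qed
  moreover have "finite (snd ` supp x \<times> {..<n})" using PQ_fin[OF x] by simp
  ultimately have f: "finite (supp (psi n \<xi> x))" by (rule finite_subset)
  have "j < n" if "psi n \<xi> x (w, j) \<noteq> 0" for w j
  proof -
    have "(w, j) \<in> supp (psi n \<xi> x)" using that by (simp add: supp_def)
    then show ?thesis using sub by auto
  qed
  then show ?thesis using f by (auto simp: SG_def)
qed

lemma end_bij: "bij_betw (\<lambda>i. end_v n i w) {..<n} {..<n}"
proof (rule bij_betw_imageI)
  show "inj_on (\<lambda>i. end_v n i w) {..<n}"
  proof (rule inj_onI)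
    fix i j assume i: "i \<in> {..<n}" and j: "j \<in> {..<n}" and e: "end_v n i w = end_v n j w"
    have "i = st n (end_v n i w) w" using i st_end by simp
    also have "\<dots> = st n (end_v n j w) w" using e by simp
    also have "\<dots> = j" using j st_end by simp
    finally show "i = j" .
  qed
  show "(\<lambda>i. end_v n i w) ` {..<n} = {..<n}"
  proof
    show "(\<lambda>i. end_v n i w) ` {..<n} \<subseteq> {..<n}" using end_lt by auto
    show "{..<n} \<subseteq> (\<lambda>i. end_v n i w) ` {..<n}"
    proof
      fix k assume "k \<in> {..<n}"
      then have "k = end_v n (st n k w) w" "st n k w \<in> {..<n}" using end_st st_lt by auto
      then show "k \<in> (\<lambda>i. end_v n i w) ` {..<n}" by blast
    qed
  qed
qed

lemma psi_ES: assumes x: "x \<in> PQ n"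
  shows "psi n \<xi> x (w, j) = (\<Sum>k<n. ES n x k w * fG n \<xi> k j)"
proof -
  have "psi n \<xi> x (w, j) = (\<Sum>b\<in>supp x. x b * psi_basis n \<xi> b (w, j))" by (simp add: psi_def)
  also have "\<dots> = (\<Sum>b\<in>{..<n} \<times> {w}. x b * psi_basis n \<xi> b (w, j))"
  proof (rule sum_supp_eq)
    show "finite (supp x)" using PQ_fin[OF x] .
    show "finite ({..<n} \<times> {w})" by simp
    fix a assume a: "a \<in> supp x - {..<n} \<times> {w}"
    then have "fst a < n" using PQ_lt[OF x] by auto
    then have "snd a \<noteq> w" using a by (cases a) auto
    then show "x a * psi_basis n \<xi> a (w, j) = 0" using \<open>fst a < n\<close> by (simp add: psi_basis_E Ew_def)
  next
    fix b assume "b \<in> {..<n} \<times> {w} - supp x"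
    then show "x b * psi_basis n \<xi> b (w, j) = 0" by (simp add: supp_def)
  qed
  also have "\<dots> = (\<Sum>i<n. x (i, w) * fG n \<xi> (end_v n i w) j)"
    by (rule sum.reindex_cong[of "\<lambda>i. (i, w)"]) (auto simp: inj_on_def psi_basis_E Ew_def)
  also have "\<dots> = (\<Sum>i<n. (\<lambda>k. ES n x k w * fG n \<xi> k j) (end_v n i w))"
    by (rule sum.cong[OF refl]) (simp add: ES_def st_end)
  also have "\<dots> = (\<Sum>k<n. ES n x k w * fG n \<xi> k j)"
    by (rule sum.reindex_bij_betw[OF end_bij])
  finally show ?thesis .
qed

lemma ortho2: "k < n \<Longrightarrow> l < n \<Longrightarrow> (\<Sum>j<n. X (int l * int j) * X (- (int k * int j))) / of_nat n = (if l = k then 1 else 0)"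
proof -
  assume k: "k < n" and l: "l < n"
  have "(\<Sum>j<n. X (int l * int j) * X (- (int k * int j))) = (\<Sum>j<n. X (int j * (int l - int k)))"
    by (rule sum.cong[OF refl]) (simp add: X_add[symmetric] algebra_simps)
  also have "\<dots> = (if (int l - int k) mod int n = 0 then of_nat n else 0)" by (rule ortho)
  also have "((int l - int k) mod int n = 0) = (l = k)"
  proof
    assume "(int l - int k) mod int n = 0"
    then have "int l mod int n = int k mod int n" by (simp add: mod_eq_dvd_iff dvd_eq_mod_eq_0)
    then show "l = k" using k l by simp
  qed simp
  finally show ?thesis using nnz by simp
qed

lemma ES_inv: assumes x: "x \<in> PQ n" and k: "k < n"
  shows "ES n x k w = (\<Sum>j<n. X (- (int k * int j)) * psi n \<xi> x (w, j))"
proof -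
  have "(\<Sum>j<n. X (- (int k * int j)) * psi n \<xi> x (w, j))
      = (\<Sum>j<n. \<Sum>l<n. ES n x l w * (X (int l * int j) * X (- (int k * int j)) / of_nat n))"
    by (simp add: psi_ES[OF x] sum_distrib_left fG_X mult_ac)
  also have "\<dots> = (\<Sum>l<n. ES n x l w * ((\<Sum>j<n. X (int l * int j) * X (- (int k * int j))) / of_nat n))"
    by (subst sum.swap) (simp add: sum_distrib_left sum_divide_distrib)
  also have "\<dots> = (\<Sum>l<n. ES n x l w * (if l = k then 1 else 0))"
    by (rule sum.cong[OF refl]) (simp add: ortho2 k)
  also have "\<dots> = ES n x k w" using k by (simp add: if_distrib[of "\<lambda>x. _ * x"] cong: if_cong)
  finally show ?thesis by simp
qed

lemma psi_J: assumes x: "x \<in> PQ n"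
  shows "psi n \<xi> x \<in> J_skew \<longleftrightarrow> (\<forall>k<n. ES n x k \<in> I_R)"
proof
  assume J: "psi n \<xi> x \<in> J_skew"
  show "\<forall>k<n. ES n x k \<in> I_R"
  proof (intro allI impI)
    fix k assume k: "k < n"
    have "ES n x k = (\<lambda>w. \<Sum>j<n. X (- (int k * int j)) * (\<lambda>w. psi n \<xi> x (w, j)) w)"
      using ES_inv[OF x k] by auto
    also have "\<dots> \<in> I_R" unfolding I_R_def
      by (rule IG_sum) (use J in \<open>auto simp: J_skew_def I_R_def\<close>)
    finally show "ES n x k \<in> I_R" .
  qed
next
  assume E: "\<forall>k<n. ES n x k \<in> I_R"
  show "psi n \<xi> x \<in> J_skew" unfolding J_skew_def
  proof (intro CollectI allI)
    fix j
    have "(\<lambda>w. psi n \<xi> x (w, j)) = (\<lambda>w. \<Sum>k<n. fG n \<xi> k j * ES n x k w)"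
      by (simp add: psi_ES[OF x] mult.commute)
    also have "\<dots> \<in> I_R" unfolding I_R_def
      by (rule IG_sum) (use E in \<open>auto simp: I_R_def\<close>)
    finally show "(\<lambda>w. psi n \<xi> x (w, j)) \<in> I_R" .
  qed
qed

end

lemma supp_add_sub: "supp (\<lambda>c. x c + y c) \<subseteq> supp x \<union> supp (y :: _ \<Rightarrow> 'a::comm_ring_1)"
  by (auto simp: supp_def)
lemma supp_smult_sub: "supp (\<lambda>c. a * x c) \<subseteq> supp (x :: _ \<Rightarrow> 'a::comm_ring_1)"
  by (auto simp: supp_def)

lemma IG_finite:
  assumes "\<And>s. s \<in> S \<Longrightarrow> finite (supp s)"
  shows "x \<in> ideal_gen m B S \<Longrightarrow> finite (supp x)"
proof (induction rule: ideal_gen.induct)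
  case (gen s) then show ?case using assms by simp
next
  case zero then show ?case by (simp add: supp_def)
next
  case (add x y) then show ?case using supp_add_sub[of x y] finite_subset by blast
next
  case (smult x a) then show ?case using supp_smult_sub[of a x] finite_subset by blast
next
  case (left b x) then show ?case by (simp add: conv_finite)
next
  case (right b x) then show ?case by (simp add: conv_finite)
qed

lemma R_rels_fin: "s \<in> R_rels \<Longrightarrow> finite (supp s)"
proof -
  assume "s \<in> R_rels"
  then obtain a b where "s = (\<lambda>c. vec a c + vec b c)" by (auto simp: R_rels_def)
  moreover have "supp (\<lambda>c. vec a c + vec b c :: 'a) \<subseteq> {a, b}" by (auto simp: supp_def vec_def)
  ultimately show ?thesis using finite_subset by (metis finite.emptyI finite_insert)
qed

lemma IR_finite: "r \<in> I_R \<Longrightarrow> finite (supp r)"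
  unfolding I_R_def by (rule IG_finite[OF R_rels_fin])

lemma mv_fm: "mv free_mult a b c = (if c = a @ b then 1 else 0)"
  by (auto simp: mv_def free_mult_def)

lemma sum_single2:
  fixes r :: "'b \<Rightarrow> 'a::comm_ring_1"
  assumes "finite S" "supp r \<subseteq> S"
  shows "(\<Sum>b\<in>S. r b * (if P \<and> b = b0 then 1 else 0)) = (if P then r b0 else 0)"
  using sum_single[OF assms, of b0] by (cases P) simp_all

lemma app_left_iff: "(w = a @ b) = (take (length a) w = a \<and> b = drop (length a) w)"
  by (metis append_eq_conv_conj)

lemma cf_left:
  fixes r :: "letter list \<Rightarrow> 'a::comm_ring_1"
  assumes f: "finite (supp r)"
  shows "conv free_mult (vec a) r w = (if take (length a) w = a then r (drop (length a) w) else 0)"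
proof -
  have "conv free_mult (vec a) r w = (\<Sum>b\<in>supp r. r b * mv free_mult a b w)" by (rule conv_vec_left[OF f])
  also have "\<dots> = (\<Sum>b\<in>supp r. r b * (if take (length a) w = a \<and> b = drop (length a) w then 1 else 0))"
    by (rule sum.cong[OF refl]) (simp add: mv_fm app_left_iff)
  also have "\<dots> = (if take (length a) w = a then r (drop (length a) w) else 0)"
    by (rule sum_single2[OF f]) simp
  finally show ?thesis .
qed

lemma app_right_iff: "(w = b @ a) = (length a \<le> length w \<and> drop (length w - length a) w = a \<and> b = take (length w - length a) w)"
proof
  assume "w = b @ a" then show "length a \<le> length w \<and> drop (length w - length a) w = a \<and> b = take (length w - length a) w" by simp
next
  assume h: "length a \<le> length w \<and> drop (length w - length a) w = a \<and> b = take (length w - length a) w"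
  then show "w = b @ a" by (metis append_take_drop_id)
qed

lemma cf_right:
  fixes r :: "letter list \<Rightarrow> 'a::comm_ring_1"
  assumes f: "finite (supp r)"
  shows "conv free_mult r (vec a) w = (if length a \<le> length w \<and> drop (length w - length a) w = a then r (take (length w - length a) w) else 0)"
proof -
  have "conv free_mult r (vec a) w = (\<Sum>b\<in>supp r. r b * mv free_mult b a w)" by (rule conv_vec_right[OF f])
  also have "\<dots> = (\<Sum>b\<in>supp r. r b * (if (length a \<le> length w \<and> drop (length w - length a) w = a) \<and> b = take (length w - length a) w then 1 else 0))"
    by (rule sum.cong[OF refl]) (simp add: mv_fm app_right_iff conj_assoc)
  also have "\<dots> = (if length a \<le> length w \<and> drop (length w - length a) w = a then r (take (length w - length a) w) else 0)"
    by (rule sum_single2[OF f]) simp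
  finally show ?thesis .
qed

lemma cfp_left:
  fixes y :: "nat \<times> letter list \<Rightarrow> 'a::comm_ring_1"
  assumes f: "finite (supp y)"
  shows "conv (path_mult n) (vec (i0, u)) y (i, v) = (if i = i0 \<and> take (length u) v = u then y (end_v n i0 u, drop (length u) v) else 0)"
proof -
  have "conv (path_mult n) (vec (i0, u)) y (i, v) = (\<Sum>b\<in>supp y. y b * mv (path_mult n) (i0, u) b (i, v))" by (rule conv_vec_left[OF f])
  also have "\<dots> = (\<Sum>b\<in>supp y. y b * (if (i = i0 \<and> take (length u) v = u) \<and> b = (end_v n i0 u, drop (length u) v) then 1 else 0))"
    by (rule sum.cong[OF refl]) (auto simp: mv_pm app_left_iff)
  also have "\<dots> = (if i = i0 \<and> take (length u) v = u then y (end_v n i0 u, drop (length u) v) else 0)"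
    by (rule sum_single2[OF f]) simp
  finally show ?thesis .
qed

lemma cfp_right:
  fixes y :: "nat \<times> letter list \<Rightarrow> 'a::comm_ring_1"
  assumes f: "finite (supp y)"
  shows "conv (path_mult n) y (vec (i0, u)) (i, v) = (if length u \<le> length v \<and> drop (length v - length u) v = u \<and> end_v n i (take (length v - length u) v) = i0 then y (i, take (length v - length u) v) else 0)"
proof -
  have "conv (path_mult n) y (vec (i0, u)) (i, v) = (\<Sum>b\<in>supp y. y b * mv (path_mult n) b (i0, u) (i, v))" by (rule conv_vec_right[OF f])
  also have "\<dots> = (\<Sum>b\<in>supp y. y b * (if (length u \<le> length v \<and> drop (length v - length u) v = u \<and> end_v n i (take (length v - length u) v) = i0) \<and> b = (i, take (length v - length u) v) then 1 else 0))"
  proof (rule sum.cong[OF refl])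
    fix b :: "nat \<times> letter list"
    obtain j t where b: "b = (j, t)" by force
    have "(end_v n j t = i0 \<and> (i, v) = (j, t @ u)) = ((length u \<le> length v \<and> drop (length v - length u) v = u \<and> end_v n i (take (length v - length u) v) = i0) \<and> b = (i, take (length v - length u) v))"
      using app_right_iff[of v t u] b by auto
    then show "y b * mv (path_mult n) b (i0, u) (i, v) = y b * (if (length u \<le> length v \<and> drop (length v - length u) v = u \<and> end_v n i (take (length v - length u) v) = i0) \<and> b = (i, take (length v - length u) v) then 1 else 0)"
      by (simp add: mv_pm b)
  qed
  also have "\<dots> = (if length u \<le> length v \<and> drop (length v - length u) v = u \<and> end_v n i (take (length v - length u) v) = i0 then y (i, take (length v - length u) v) else 0)"
    by (rule sum_single2[OF f]) simp
  finally show ?thesis .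
qed

definition projm :: "nat \<Rightarrow> int \<Rightarrow> (letter list \<Rightarrow> 'a::zero) \<Rightarrow> letter list \<Rightarrow> 'a" where
  "projm n e r = (\<lambda>w. if deg w mod int n = e mod int n then r w else 0)"

lemma projm_apply: "projm n e r w = (if deg w mod int n = e mod int n then r w else 0)"
  by (simp add: projm_def)

lemma supp_projm: "supp (projm n e r) \<subseteq> supp r" by (auto simp: supp_def projm_def)

lemma deg_cong: "(a + b) mod (m::int) = e mod m \<longleftrightarrow> b mod m = (e - a) mod m"
  by (simp add: mod_eq_dvd_iff algebra_simps)

lemma IR_proj: "r \<in> I_R \<Longrightarrow> projm n e r \<in> I_R"
  unfolding I_R_def
proof (induction r arbitrary: e rule: ideal_gen.induct)
  case (gen s)
  then obtain a b where s: "s = (\<lambda>c. vec a c + vec b c)" and d: "deg a = deg b"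
    by (auto simp: R_rels_def)
  have "projm n e s = (if deg a mod int n = e mod int n then s else (\<lambda>_. 0))"
    by (rule ext) (auto simp: projm_def s vec_def d)
  then show ?case using gen by (auto intro: ideal_gen.gen ideal_gen.zero)
next
  case zero
  have "projm n e (\<lambda>_. 0 :: 'a) = (\<lambda>_. 0)" by (simp add: projm_def)
  then show ?case by (simp add: ideal_gen.zero)
next
  case (add x y)
  have "projm n e (\<lambda>c. x c + y c) = (\<lambda>c. projm n e x c + projm n e y c)" by (auto simp: projm_def)
  then show ?case using add by (simp add: ideal_gen.add)
next
  case (smult x a)
  have "projm n e (\<lambda>c. a * x c) = (\<lambda>c. a * projm n e x c)" by (auto simp: projm_def)
  then show ?case using smult by (simp add: ideal_gen.smult)
next
  case (left b x)
  have fx: "finite (supp x)" using left(2) IR_finite unfolding I_R_def by blast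
  have fp: "finite (supp (projm n (e - deg b) x))" using finite_subset[OF supp_projm fx] .
  have "projm n e (conv free_mult (vec b) x) = conv free_mult (vec b) (projm n (e - deg b) x)"
  proof
    fix w
    show "projm n e (conv free_mult (vec b) x) w = conv free_mult (vec b) (projm n (e - deg b) x) w"
    proof (cases "take (length b) w = b")
      case True
      have "deg w = deg b + deg (drop (length b) w)"
        using True by (metis append_take_drop_id deg_simps(4))
      then show ?thesis using True by (simp add: projm_apply cf_left[OF fx] cf_left[OF fp] deg_cong)
    next
      case False
      then show ?thesis by (simp add: projm_apply cf_left[OF fx] cf_left[OF fp])
    qed
  qed
  then show ?case using left by (simp add: ideal_gen.left)
next
  case (right b x)
  have fx: "finite (supp x)" using right(2) IR_finite unfolding I_R_def by blast
  have fp: "finite (supp (projm n (e - deg b) x))" using finite_subset[OF supp_projm fx] .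
  have "projm n e (conv free_mult x (vec b)) = conv free_mult (projm n (e - deg b) x) (vec b)"
  proof
    fix w
    show "projm n e (conv free_mult x (vec b)) w = conv free_mult (projm n (e - deg b) x) (vec b) w"
    proof (cases "length b \<le> length w \<and> drop (length w - length b) w = b")
      case True
      have "deg w = deg b + deg (take (length w - length b) w)"
        using True by (metis append_take_drop_id deg_simps(4) add.commute)
      then show ?thesis using True by (simp add: projm_apply cf_right[OF fx] cf_right[OF fp] deg_cong)
    next
      case False
      show ?thesis by (simp only: projm_apply cf_right[OF fx] cf_right[OF fp] if_not_P[OF False]) simp
    qed
  qed
  then show ?case using right by (simp add: ideal_gen.right)
qed

definition lift :: "nat \<Rightarrow> nat \<Rightarrow> (letter list \<Rightarrow> 'a::zero) \<Rightarrow> nat \<times> letter list \<Rightarrow> 'a" where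
  "lift n k r = (\<lambda>(i, w). if i = st n k w then r w else 0)"

lemma lift_apply: "lift n k r (i, w) = (if i = st n k w then r w else 0)"
  by (simp add: lift_def)

lemma supp_lift: "supp (lift n k r) \<subseteq> (\<lambda>w. (st n k w, w)) ` supp r"
  by (auto simp: supp_def lift_def split: if_splits)

lemma ES_apply: "ES n x k w = x (st n k w, w)" by (simp add: ES_def)

lemma st_same: "deg a = deg b \<Longrightarrow> st n k a = st n k b" by (simp add: st_def)

lemma ES_two:
  assumes "deg a = deg b" "a \<noteq> b"
  shows "ES n (\<lambda>c. vec (i, a) c + vec (i, b) c :: 'a::comm_ring_1) k = (if st n k a = i then (\<lambda>w. vec a w + vec b w) else (\<lambda>_. 0))"
proof (rule ext)
  fix w
  have "st n k a = st n k b" by (rule st_same[OF assms(1)])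
  then show "ES n (\<lambda>c. vec (i, a) c + vec (i, b) c :: 'a::comm_ring_1) k w = (if st n k a = i then (\<lambda>w. vec a w + vec b w) else (\<lambda>_. 0)) w"
    using assms(2) by (cases "w = a"; cases "w = b") (auto simp: ES_def vec_def)
qed

lemma two_fin: "finite (supp (\<lambda>c. vec p c + vec q c :: 'a::comm_ring_1))"
proof -
  have "supp (\<lambda>c. vec p c + vec q c :: 'a) \<subseteq> {p, q}" by (auto simp: supp_def vec_def)
  then show ?thesis by (rule finite_subset) simp
qed

context lsetup begin

lemma st_deg: "s < n \<Longrightarrow> (st n k v = s) = (deg v mod int n = (int k - int s) mod int n)"
proof -
  assume s: "s < n"
  have "(st n k v = s) = ((int k - deg v) mod int n = int s)"
    using npos by (auto simp: st_def)
  also have "\<dots> = ((int k - deg v) mod int n = int s mod int n)" using s by simp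
  also have "\<dots> = (int n dvd (int k - deg v - int s))" by (simp add: mod_eq_dvd_iff)
  also have "\<dots> = (int n dvd (deg v - (int k - int s)))"
    by (metis dvd_minus_iff minus_diff_eq diff_diff_eq2 diff_diff_eq)
  also have "\<dots> = (deg v mod int n = (int k - int s) mod int n)" by (simp add: mod_eq_dvd_iff)
  finally show ?thesis .
qed

lemma ES_add: "ES n (\<lambda>c. x c + y c) k = (\<lambda>w. ES n x k w + ES n y k w)" by (simp add: ES_def)
lemma ES_smult: "ES n (\<lambda>c. a * x c) k = (\<lambda>w. a * ES n x k w)" by (simp add: ES_def)

lemma PQ_two: "fst p < n \<Longrightarrow> fst q < n \<Longrightarrow> (\<lambda>c. vec p c + vec q c :: 'a) \<in> PQ n"
proof -
  have "finite (supp (\<lambda>c. vec p c + vec q c :: 'a))" by (rule two_fin)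
  moreover assume "fst p < n" "fst q < n"
  ultimately show ?thesis by (auto simp: PQ_def vec_def split: if_splits)
qed

lemma H_to_ES:
  assumes beta: "\<forall>i<n. \<beta> i = (-1 :: 'a)"
  shows "x \<in> H_ideal n (\<lambda>_. 0) \<beta> \<Longrightarrow> x \<in> PQ n \<and> (\<forall>k<n. ES n x k \<in> I_R)"
  unfolding H_ideal_def
proof (induction rule: ideal_gen.induct)
  case (gen s)
  then obtain i where i: "i < n" and
    s: "s = (\<lambda>c. vec (i, [D,U,U]) c - 0 * vec (i, [U,D,U]) c - \<beta> i * vec (i, [U,U,D]) c)
       \<or> s = (\<lambda>c. vec ((i+1) mod n, [D,D,U]) c - 0 * vec ((i+1) mod n, [D,U,D]) c - \<beta> i * vec ((i+1) mod n, [U,D,D]) c)"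
    by (auto simp: H_rels_def)
  have bi: "\<beta> i = -1" using beta i by simp
  have i1: "(i + 1) mod n < n" using npos by simp
  from s show ?case
  proof
    assume s1: "s = (\<lambda>c. vec (i, [D,U,U]) c - 0 * vec (i, [U,D,U]) c - \<beta> i * vec (i, [U,U,D]) c)"
    have ss: "s = (\<lambda>c. vec (i, [D,U,U]) c + vec (i, [U,U,D]) c)" using s1 bi by simp
    have r: "(\<lambda>w. vec [D,U,U] w + vec [U,U,D] w :: 'a) \<in> I_R"
      unfolding I_R_def by (rule ideal_gen.gen) (simp add: R_rels_def)
    have "ES n s k \<in> I_R" if "k < n" for k
      by (cases "st n k [D,U,U] = i") (simp_all add: ss ES_two r, simp_all add: I_R_def ideal_gen.zero)
    then show ?thesis using PQ_two[of "(i, [D,U,U])" "(i, [U,U,D])"] i ss by simp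
  next
    assume s1: "s = (\<lambda>c. vec ((i+1) mod n, [D,D,U]) c - 0 * vec ((i+1) mod n, [D,U,D]) c - \<beta> i * vec ((i+1) mod n, [U,D,D]) c)"
    have ss: "s = (\<lambda>c. vec ((i+1) mod n, [D,D,U]) c + vec ((i+1) mod n, [U,D,D]) c)" using s1 bi by simp
    have r: "(\<lambda>w. vec [D,D,U] w + vec [U,D,D] w :: 'a) \<in> I_R"
      unfolding I_R_def by (rule ideal_gen.gen) (simp add: R_rels_def)
    have "ES n s k \<in> I_R" if "k < n" for k
      by (cases "st n k [D,D,U] = (i+1) mod n") (simp_all add: ss ES_two r, simp_all add: I_R_def ideal_gen.zero)
    then show ?thesis using PQ_two[of "((i+1) mod n, [D,D,U])" "((i+1) mod n, [U,D,D])"] i1 ss by simp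
  qed
next
  case zero
  have "ES n (\<lambda>_. 0 :: 'a) k = (\<lambda>_. 0)" for k by (simp add: ES_def)
  then show ?case by (auto simp: PQ_def supp_def I_R_def intro: ideal_gen.zero)
next
  case (add x y)
  have "(\<lambda>c. x c + y c) \<in> PQ n"
  proof -
    have f: "finite (supp (\<lambda>c. x c + y c))" using add finite_subset[OF supp_add_sub] by (auto simp: PQ_def)
    have "i < n" if "x (i, w) + y (i, w) \<noteq> 0" for i w
    proof -
      have "x (i, w) \<noteq> 0 \<or> y (i, w) \<noteq> 0" using that by auto
      then show ?thesis using add by (auto simp: PQ_def)
    qed
    then show ?thesis using f by (auto simp: PQ_def)
  qed
  then show ?case using add by (auto simp: ES_add I_R_def intro: ideal_gen.add)
next
  case (smult x a)
  have "(\<lambda>c. a * x c) \<in> PQ n"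
    using smult finite_subset[OF supp_smult_sub] by (auto simp: PQ_def)
  then show ?case using smult by (auto simp: ES_smult I_R_def intro: ideal_gen.smult)
next
  case (left b x)
  obtain i0 u where b: "b = (i0, u)" by force
  have i0: "i0 < n" using left b by simp
  have fx: "finite (supp x)" using left by (simp add: PQ_def)
  have PQy: "conv (path_mult n) (vec b) x \<in> PQ n"
    using i0 by (auto simp: PQ_def conv_finite b cfp_left[OF fx] split: if_splits)
  have "ES n (conv (path_mult n) (vec b) x) k \<in> I_R" if k: "k < n" for k
  proof -
    have Ek: "ES n x k \<in> I_R" using left k by simp
    have fE: "finite (supp (ES n x k))" using IR_finite[OF Ek] .
    define e where "e = int k - int (end_v n i0 u)"
    have fP: "finite (supp (projm n e (ES n x k)))" using finite_subset[OF supp_projm fE] .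
    have "ES n (conv (path_mult n) (vec b) x) k = conv free_mult (vec u) (projm n e (ES n x k))"
    proof
      fix w
      show "ES n (conv (path_mult n) (vec b) x) k w = conv free_mult (vec u) (projm n e (ES n x k)) w"
      proof (cases "take (length u) w = u")
        case True
        define d where "d = drop (length u) w"
        have w: "w = u @ d" using True by (metis append_take_drop_id d_def)
        have el: "end_v n i0 u < n" using end_lt[OF i0] .
        have "(st n k w = i0) = (end_v n i0 w = k)" using st_iff[OF i0 k] .
        also have "\<dots> = (end_v n (end_v n i0 u) d = k)" by (simp add: w end_append)
        also have "\<dots> = (st n k d = end_v n i0 u)" using st_iff[OF el k] by simp
        finally have c1: "(st n k w = i0) = (st n k d = end_v n i0 u)" .
        have c2: "(st n k d = end_v n i0 u) = (deg d mod int n = e mod int n)"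
          using st_deg[OF el] by (simp add: e_def)
        show ?thesis
          using True c1 c2
          by (auto simp: ES_apply b cfp_left[OF fx] cf_left[OF fP] projm_apply d_def)
      next
        case False
        then show ?thesis by (simp add: ES_apply b cfp_left[OF fx] cf_left[OF fP])
      qed
    qed
    also have "\<dots> \<in> I_R" using IR_proj[OF Ek] unfolding I_R_def by (intro ideal_gen.left) simp_all
    finally show ?thesis .
  qed
  then show ?case using PQy by simp
next
  case (right b x)
  obtain i0 u where b: "b = (i0, u)" by force
  have i0: "i0 < n" using right b by simp
  have fx: "finite (supp x)" using right by (simp add: PQ_def)
  have PQy: "conv (path_mult n) x (vec b) \<in> PQ n"
  proof -
    have "finite (supp (conv (path_mult n) x (vec b)))" by (rule conv_finite)
    moreover have "i < n" if "conv (path_mult n) x (vec b) (i, w) \<noteq> 0" for i w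
      using that right by (auto simp: PQ_def b cfp_right[OF fx] split: if_splits)
    ultimately show ?thesis by (auto simp: PQ_def)
  qed
  have "ES n (conv (path_mult n) x (vec b)) k \<in> I_R" if k: "k < n" for k
  proof -
    have Ei: "ES n x i0 \<in> I_R" using right i0 by simp
    have fE: "finite (supp (ES n x i0))" using IR_finite[OF Ei] .
    have "ES n (conv (path_mult n) x (vec b)) k = (if end_v n i0 u = k then conv free_mult (ES n x i0) (vec u) else (\<lambda>_. 0))"
    proof
      fix w
      define s where "s = st n k w"
      have sl: "s < n" using st_lt by (simp add: s_def)
      show "ES n (conv (path_mult n) x (vec b)) k w = (if end_v n i0 u = k then conv free_mult (ES n x i0) (vec u) else (\<lambda>_. 0)) w"
      proof (cases "length u \<le> length w \<and> drop (length w - length u) w = u")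
        case True
        define v where "v = take (length w - length u) w"
        have w: "w = v @ u" using True by (metis append_take_drop_id v_def)
        have esw: "end_v n s w = k" using end_st[OF k] by (simp add: s_def)
        have c1: "(end_v n s v = i0) = (st n i0 v = s)" using st_iff[OF sl i0] by simp
        show ?thesis
        proof (cases "end_v n i0 u = k")
          case True2: True
          have "end_v n (st n i0 v) w = k" using True2 end_st[OF i0] by (simp add: w end_append)
          then have "st n k w = st n i0 v" using st_iff[OF st_lt k] by simp
          then have "s = st n i0 v" by (simp add: s_def)
          then show ?thesis using True True2 c1
            by (simp add: ES_apply b cfp_right[OF fx] cf_right[OF fE] s_def v_def)
        next
          case False2: False
          have "end_v n s v \<noteq> i0"
          proof
            assume "end_v n s v = i0"
            then have "end_v n s w = end_v n i0 u" by (simp add: w end_append)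
            then show False using esw False2 by simp
          qed
          then show ?thesis using True False2
            by (simp add: ES_apply b cfp_right[OF fx] s_def v_def)
        qed
      next
        case False
        have nc: "\<not> (length u \<le> length w \<and> drop (length w - length u) w = u \<and> end_v n (st n k w) (take (length w - length u) w) = i0)" using False by auto
        show ?thesis by (simp only: ES_apply b cfp_right[OF fx] cf_right[OF fE] if_not_P[OF False] if_not_P[OF nc]) (simp add: cf_right[OF fE] if_not_P[OF False])
      qed
    qed
    also have "\<dots> \<in> I_R" using Ei unfolding I_R_def by (auto intro: ideal_gen.right ideal_gen.zero)
    finally show ?thesis .
  qed
  then show ?case using PQy by simp
qed

end

lemma sum_delta_cond:
  "(\<Sum>j<(n::nat). if i = j \<and> P then f j else 0) = (if i < n \<and> P then f i else (0::'a::comm_monoid_add))"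
  by (cases P) (simp_all add: sum.delta)

lemma lift_add: "lift n k (\<lambda>c. x c + y c) = (\<lambda>c. lift n k x c + lift n k y c :: 'a::comm_ring_1)"
  by (intro ext) (auto simp: lift_def split: prod.splits)
lemma lift_smult: "lift n k (\<lambda>c. a * x c) = (\<lambda>c. a * lift n k x c :: 'a::comm_ring_1)"
  by (intro ext) (auto simp: lift_def split: prod.splits)
lemma lift_zero: "lift n k (\<lambda>_. 0) = (\<lambda>_. 0)"
  by (auto simp: lift_def)

lemma lift_fin: "finite (supp r) \<Longrightarrow> finite (supp (lift n k r))"
  using finite_subset[OF supp_lift] by blast

context lsetup begin

lemma st_m1: "st n k [D,D,U] = (k + 1) mod n" "st n k [U,D,D] = (k + 1) mod n"
proof -
  have "int k + 1 = int (k+1)" by simp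
  then have "nat ((int k + 1) mod int n) = (k + 1) mod n" by (simp only: zmod_int[symmetric] nat_int)
  then show "st n k [D,D,U] = (k + 1) mod n" "st n k [U,D,D] = (k + 1) mod n" by (simp_all add: st_def)
qed

lemma lift_H:
  assumes beta: "\<forall>i<n. \<beta> i = (-1 :: 'a)"
  shows "r \<in> I_R \<Longrightarrow> \<forall>k<n. lift n k r \<in> H_ideal n (\<lambda>_. 0) \<beta>"
  unfolding I_R_def
proof (induction rule: ideal_gen.induct)
  case (gen s)
  show ?case
  proof (intro allI impI)
    fix k assume k: "k < n"
    from gen consider "s = (\<lambda>c. vec [D,D,U] c + vec [U,D,D] c)" | "s = (\<lambda>c. vec [D,U,U] c + vec [U,U,D] c)"
      by (auto simp: R_rels_def)
    then show "lift n k s \<in> H_ideal n (\<lambda>_. 0) \<beta>"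
    proof cases
      case 1
      define t where "t = (\<lambda>c. vec ((k+1) mod n, [D,D,U]) c - (\<lambda>_. 0) k * vec ((k+1) mod n, [D,U,D]) c - \<beta> k * vec ((k+1) mod n, [U,D,D]) c :: 'a)"
      have tH: "t \<in> H_rels n (\<lambda>_. 0) \<beta>" unfolding H_rels_def t_def using k by blast
      have bk: "\<beta> k = -1" using beta k by simp
      have "lift n k s = t"
      proof
        fix c :: "nat \<times> letter list"
        obtain i w where c: "c = (i, w)" by force
        show "lift n k s c = t c"
          by (cases "w = [D,D,U]"; cases "w = [U,D,D]") (auto simp: c 1 t_def lift_apply vec_def bk st_m1)
      qed
      then show ?thesis using tH unfolding H_ideal_def by (simp add: ideal_gen.gen)
    next
      case 2
      define s0 where "s0 = st n k [D,U,U]"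
      have s0: "s0 < n" by (simp add: s0_def st_lt)
      have s0': "st n k [U,U,D] = s0" by (simp add: s0_def st_def)
      have s0'': "st n k [D,U,U] = s0" by (simp add: s0_def)
      define t where "t = (\<lambda>c. vec (s0, [D,U,U]) c - (\<lambda>_. 0) s0 * vec (s0, [U,D,U]) c - \<beta> s0 * vec (s0, [U,U,D]) c :: 'a)"
      have tH: "t \<in> H_rels n (\<lambda>_. 0) \<beta>" unfolding H_rels_def t_def using s0 by blast
      have bk: "\<beta> s0 = -1" using beta s0 by simp
      have "lift n k s = t"
      proof
        fix c :: "nat \<times> letter list"
        obtain i w where c: "c = (i, w)" by force
        show "lift n k s c = t c"
          by (cases "w = [D,U,U]"; cases "w = [U,U,D]") (auto simp: c 2 t_def lift_apply vec_def bk s0' s0'')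
      qed
      then show ?thesis using tH unfolding H_ideal_def by (simp add: ideal_gen.gen)
    qed
  qed
next
  case zero
  then show ?case by (simp add: lift_zero H_ideal_def ideal_gen.zero)
next
  case (add x y)
  then show ?case by (simp add: lift_add H_ideal_def ideal_gen.add)
next
  case (smult x a)
  then show ?case by (simp add: lift_smult H_ideal_def ideal_gen.smult)
next
  case (left b x)
  have fx: "finite (supp x)" using left(2) IR_finite unfolding I_R_def by blast
  show ?case
  proof (intro allI impI)
    fix k assume k: "k < n"
    have fl: "finite (supp (lift n k x))" by (rule lift_fin[OF fx])
    have "lift n k (conv free_mult (vec b) x) = (\<lambda>c. \<Sum>i0<n. 1 * conv (path_mult n) (vec (i0, b)) (lift n k x) c)"
    proof
      fix c :: "nat \<times> letter list"
      obtain i v where c: "c = (i, v)" by force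
      have R: "(\<Sum>i0<n. 1 * conv (path_mult n) (vec (i0, b)) (lift n k x) (i, v))
          = (if i < n \<and> take (length b) v = b then lift n k x (end_v n i b, drop (length b) v) else 0)"
        by (simp add: cfp_left[OF fl] sum_delta_cond)
      show "lift n k (conv free_mult (vec b) x) c = (\<Sum>i0<n. 1 * conv (path_mult n) (vec (i0, b)) (lift n k x) c)"
      proof (cases "take (length b) v = b")
        case True
        define d where "d = drop (length b) v"
        have v: "v = b @ d" using True by (metis append_take_drop_id d_def)
        show ?thesis
        proof (cases "i < n")
          case True2: True
          have el: "end_v n i b < n" using end_lt[OF True2] .
          have "(i = st n k v) = (end_v n i v = k)" using st_iff[OF True2 k] by metis
          also have "\<dots> = (end_v n (end_v n i b) d = k)" by (simp add: v end_append)
          also have "\<dots> = (end_v n i b = st n k d)" using st_iff[OF el k] by metis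
          finally have e: "(i = st n k v) = (end_v n i b = st n k d)" .
          show ?thesis unfolding c R using True True2 e
            by (simp add: lift_apply cf_left[OF fx] d_def)
        next
          case False2: False
          have "i \<noteq> st n k v" using False2 st_lt by metis
          then show ?thesis unfolding c R using False2 by (simp add: lift_apply)
        qed
      next
        case False
        then show ?thesis unfolding c R by (simp add: lift_apply cf_left[OF fx])
      qed
    qed
    also have "\<dots> \<in> H_ideal n (\<lambda>_. 0) \<beta>" unfolding H_ideal_def
      by (rule IG_sum) (use left k in \<open>auto simp: H_ideal_def intro: ideal_gen.left\<close>)
    finally show "lift n k (conv free_mult (vec b) x) \<in> H_ideal n (\<lambda>_. 0) \<beta>" .
  qed
next
  case (right b x)
  have fx: "finite (supp x)" using right(2) IR_finite unfolding I_R_def by blast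
  show ?case
  proof (intro allI impI)
    fix k assume k: "k < n"
    have fl: "\<And>i0. finite (supp (lift n i0 x))" by (rule lift_fin[OF fx])
    have "lift n k (conv free_mult x (vec b)) = (\<lambda>c. \<Sum>i0<n. (if end_v n i0 b = k then 1 else 0) * conv (path_mult n) (lift n i0 x) (vec (i0, b)) c)"
    proof
      fix c :: "nat \<times> letter list"
      obtain i v where c: "c = (i, v)" by force
      show "lift n k (conv free_mult x (vec b)) c = (\<Sum>i0<n. (if end_v n i0 b = k then 1 else 0) * conv (path_mult n) (lift n i0 x) (vec (i0, b)) c)"
      proof (cases "length b \<le> length v \<and> drop (length v - length b) v = b")
        case True
        define v' where "v' = take (length v - length b) v"
        have v: "v = v' @ b" using True by (metis append_take_drop_id v'_def)
        show ?thesis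
        proof (cases "i < n")
          case True2: True
          have e1: "end_v n i v' < n" using end_lt[OF True2] .
          have "(\<Sum>i0<n. (if end_v n i0 b = k then 1 else 0) * conv (path_mult n) (lift n i0 x) (vec (i0, b)) c)
             = (\<Sum>i0<n. if i0 = end_v n i v' then (if end_v n i0 b = k then 1 else 0) * (if i = st n i0 v' then x v' else 0) else 0)"
            by (rule sum.cong[OF refl]) (auto simp: c cfp_right[OF fl] lift_apply True v'_def)
          also have "\<dots> = (if end_v n (end_v n i v') b = k then 1 else 0) * (if i = st n (end_v n i v') v' then x v' else 0)"
            using e1 by (simp add: sum.delta)
          also have "\<dots> = (if end_v n i v = k then x v' else 0)"
            using st_end[OF True2] by (simp add: v end_append)
          also have "\<dots> = lift n k (conv free_mult x (vec b)) c"
          proof -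
            have e: "(i = st n k v) = (end_v n i v = k)" using st_iff[OF True2 k] by metis
            show ?thesis using True by (simp add: c lift_apply cf_right[OF fx] v'_def e)
          qed
          finally show ?thesis by simp
        next
          case False2: False
          have "i \<noteq> st n k v" using False2 st_lt by metis
          moreover have "\<And>i0. i \<noteq> st n i0 v'" using False2 st_lt by metis
          ultimately show ?thesis
            by (simp add: c lift_apply cfp_right[OF fl] v'_def cong: if_cong)
        qed
      next
        case False
        have nc: "\<And>i0. \<not> (length b \<le> length v \<and> drop (length v - length b) v = b \<and> end_v n i (take (length v - length b) v) = i0)"
          using False by auto
        show ?thesis
          by (simp only: c lift_apply cf_right[OF fx] cfp_right[OF fl] if_not_P[OF False] if_not_P[OF nc]) simp
      qed
    qed
    also have "\<dots> \<in> H_ideal n (\<lambda>_. 0) \<beta>" unfolding H_ideal_def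
      by (rule IG_sum) (use right in \<open>auto simp: H_ideal_def intro: ideal_gen.right\<close>)
    finally show "lift n k (conv free_mult x (vec b)) \<in> H_ideal n (\<lambda>_. 0) \<beta>" .
  qed
qed

lemma PQ_decomp:
  fixes x :: "nat \<times> letter list \<Rightarrow> 'a"
  assumes x: "x \<in> PQ n"
  shows "x = (\<lambda>c. \<Sum>k<n. 1 * lift n k (ES n x k) c)"
proof
  fix c :: "nat \<times> letter list"
  obtain i w where c: "c = (i, w)" by force
  show "x c = (\<Sum>k<n. 1 * lift n k (ES n x k) c)"
  proof (cases "i < n")
    case True
    have "(\<Sum>k<n. 1 * lift n k (ES n x k) c) = (\<Sum>k<n. if k = end_v n i w then x (i, w) else 0)"
    proof (rule sum.cong[OF refl])
      fix k assume "k \<in> {..<n}"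
      then have e: "(i = st n k w) = (k = end_v n i w)" using st_iff[OF True, of k w] by auto
      show "1 * lift n k (ES n x k) c = (if k = end_v n i w then x (i, w) else 0)"
        by (auto simp: c lift_apply ES_apply e st_end[OF True])
    qed
    also have "\<dots> = x (i, w)" using end_lt[OF True] by simp
    finally show ?thesis by (simp add: c)
  next
    case False
    have "x (i, w) = 0" using x False by (auto simp: PQ_def)
    moreover have "\<And>k. i \<noteq> st n k w" using False st_lt by metis
    ultimately show ?thesis by (simp add: c lift_apply)
  qed
qed

lemma ES_to_H:
  fixes x :: "nat \<times> letter list \<Rightarrow> 'a"
  assumes beta: "\<forall>i<n. \<beta> i = (-1 :: 'a)" and x: "x \<in> PQ n" and E: "\<forall>k<n. ES n x k \<in> I_R"
  shows "x \<in> H_ideal n (\<lambda>_. 0) \<beta>"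
proof -
  have "(\<lambda>c. \<Sum>k<n. 1 * lift n k (ES n x k) c) \<in> H_ideal n (\<lambda>_. 0) \<beta>"
    unfolding H_ideal_def
    by (rule IG_sum) (use lift_H[OF beta] E in \<open>auto simp: H_ideal_def\<close>)
  then show ?thesis using PQ_decomp[OF x] by simp
qed

lemma surj_psi:
  assumes y: "y \<in> SG n"
  shows "\<exists>x \<in> PQ n. psi n \<xi> x = y"
proof -
  define R where "R k = (\<lambda>w. \<Sum>j<n. X (- (int k * int j)) * y (w, j))" for k
  define x where "x = (\<lambda>c. \<Sum>k<n. 1 * lift n k (R k) c)"
  have fy: "finite (supp y)" using y by (simp add: SG_def)
  have suppR: "w \<in> fst ` supp y" if "R k w \<noteq> 0" for k w
  proof -
    have "(\<Sum>j<n. X (- (int k * int j)) * y (w, j)) \<noteq> 0" using that by (simp add: R_def)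
    then obtain j where "X (- (int k * int j)) * y (w, j) \<noteq> 0"
      by (rule sum.not_neutral_contains_not_neutral)
    then have "(w, j) \<in> supp y" by (simp add: supp_def)
    then show ?thesis by force
  qed
  have "supp x \<subseteq> {..<n} \<times> fst ` supp y"
    unfolding x_def
  proof (rule supp_sum_sub)
    fix k assume "k \<in> {..<n}"
    show "supp (lift n k (R k)) \<subseteq> {..<n} \<times> fst ` supp y"
    proof
      fix c assume "c \<in> supp (lift n k (R k))"
      then obtain i w where c: "c = (i, w)" "i = st n k w" "R k w \<noteq> 0"
        by (cases c) (auto simp: supp_def lift_apply split: if_splits)
      then show "c \<in> {..<n} \<times> fst ` supp y" using suppR st_lt by auto
    qed
  qed
  moreover have "finite ({..<n} \<times> fst ` supp y)" using fy by simp
  ultimately have fx: "finite (supp x)" by (rule finite_subset)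
  have xPQ: "x \<in> PQ n"
  proof -
    have "i < n" if "x (i, w) \<noteq> 0" for i w
      using that \<open>supp x \<subseteq> _\<close> by (auto simp: supp_def)
    then show ?thesis using fx by (auto simp: PQ_def)
  qed
  have ES: "ES n x k = R k" if k: "k < n" for k
  proof
    fix w
    have "ES n x k w = (\<Sum>k'<n. if k' = k then R k w else 0)"
      unfolding ES_apply x_def
    proof (rule sum.cong[OF refl])
      fix k' assume "k' \<in> {..<n}"
      then have e: "(st n k w = st n k' w) = (k' = k)" using end_st k by (metis lessThan_iff)
      show "1 * lift n k' (R k') (st n k w, w) = (if k' = k then R k w else 0)"
        by (simp add: lift_apply e)
    qed
    then show "ES n x k w = R k w" using k by simp
  qed
  have "psi n \<xi> x = y"
  proof
    fix c :: "letter list \<times> nat"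
    obtain w j where c: "c = (w, j)" by force
    show "psi n \<xi> x c = y c"
    proof (cases "j < n")
      case True
      have "psi n \<xi> x c = (\<Sum>k<n. R k w * fG n \<xi> k j)"
        by (simp add: c psi_ES[OF xPQ] ES)
      also have "\<dots> = (\<Sum>k<n. \<Sum>l<n. y (w, l) * (X (int j * int k) * X (- (int l * int k)) / of_nat n))"
      proof (rule sum.cong[OF refl])
        fix k assume "k \<in> {..<n}"
        have "R k w * fG n \<xi> k j = (\<Sum>l<n. X (- (int k * int l)) * y (w, l)) * (X (int k * int j) / of_nat n)"
          by (simp add: R_def fG_X True)
        also have "\<dots> = (\<Sum>l<n. y (w, l) * (X (int j * int k) * X (- (int l * int k)) / of_nat n))"
          unfolding sum_distrib_right by (rule sum.cong[OF refl]) (simp add: algebra_simps)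
        finally show "R k w * fG n \<xi> k j = (\<Sum>l<n. y (w, l) * (X (int j * int k) * X (- (int l * int k)) / of_nat n))" .
      qed
      also have "\<dots> = (\<Sum>l<n. y (w, l) * ((\<Sum>k<n. X (int j * int k) * X (- (int l * int k))) / of_nat n))"
        by (subst sum.swap) (simp add: sum_distrib_left sum_divide_distrib)
      also have "\<dots> = (\<Sum>l<n. y (w, l) * (if j = l then 1 else 0))"
        by (rule sum.cong[OF refl]) (simp add: ortho2 True)
      also have "\<dots> = y c" using True by (simp add: c if_distrib[of "\<lambda>x. _ * x"] cong: if_cong)
      finally show ?thesis .
    next
      case False
      have "y c = 0" using y False by (auto simp: SG_def c)
      then show ?thesis using False by (simp add: c psi_ES[OF xPQ] fG_X)
    qed
  qed
  then show ?thesis using xPQ by blast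
qed

end

theorem lemma3p4:
  fixes n :: nat and \<xi> :: "'a::field_char_0" and \<beta> :: "nat \<Rightarrow> 'a"
  assumes alg_closed: "\<forall>p :: 'a poly. degree p \<noteq> 0 \<longrightarrow> (\<exists>x. poly p x = 0)"
    and n2: "n \<ge> 2"
    and prim: "primitive_root n \<xi>"
    and beta: "\<forall>i<n. \<beta> i = -1"
  shows
    "(\<forall>x \<in> PQ n. \<forall>y \<in> PQ n.
        (\<lambda>c. psi n \<xi> (conv (path_mult n) x y) c - smul n \<xi> (psi n \<xi> x) (psi n \<xi> y) c) \<in> J_skew)
   \<and> (\<forall>x \<in> PQ n. psi n \<xi> x \<in> J_skew \<longleftrightarrow> x \<in> H_ideal n (\<lambda>_. 0) \<beta>)
   \<and> (\<forall>x \<in> PQ n. \<exists>y \<in> SG n.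
        (\<lambda>c. psi n \<xi> x c - smul n \<xi> (smul n \<xi> (ff n \<xi>) y) (ff n \<xi>) c) \<in> J_skew)
   \<and> (\<forall>y \<in> SG n. \<exists>x \<in> PQ n.
        (\<lambda>c. smul n \<xi> (smul n \<xi> (ff n \<xi>) y) (ff n \<xi>) c - psi n \<xi> x c) \<in> J_skew)"
proof -
  interpret lsetup n \<xi> using n2 prim by unfold_locales
  have J0: "(\<lambda>c. 0 :: 'a) \<in> J_skew" by (simp add: J_skew_def I_R_def ideal_gen.zero)
  have ffy: "smul n \<xi> (smul n \<xi> (ff n \<xi>) y) (ff n \<xi>) = y" if "y \<in> SG n" for y
    using that by (simp add: ff_eq one_skew_def[symmetric] one_left one_right)
  have c1: "\<forall>x \<in> PQ n. \<forall>y \<in> PQ n.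
        (\<lambda>c. psi n \<xi> (conv (path_mult n) x y) c - smul n \<xi> (psi n \<xi> x) (psi n \<xi> y) c) \<in> J_skew"
    using J0 by (simp add: psi_mult)
  have c2: "\<forall>x \<in> PQ n. psi n \<xi> x \<in> J_skew \<longleftrightarrow> x \<in> H_ideal n (\<lambda>_. 0) \<beta>"
    using psi_J H_to_ES[OF beta] ES_to_H[OF beta] by blast
  have c3: "\<forall>x \<in> PQ n. \<exists>y \<in> SG n.
        (\<lambda>c. psi n \<xi> x c - smul n \<xi> (smul n \<xi> (ff n \<xi>) y) (ff n \<xi>) c) \<in> J_skew"
  proof
    fix x :: "nat \<times> letter list \<Rightarrow> 'a" assume x: "x \<in> PQ n"
    show "\<exists>y \<in> SG n. (\<lambda>c. psi n \<xi> x c - smul n \<xi> (smul n \<xi> (ff n \<xi>) y) (ff n \<xi>) c) \<in> J_skew"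
      using psi_SG[OF x] ffy[OF psi_SG[OF x]] J0 by (intro bexI[of _ "psi n \<xi> x"]) simp_all
  qed
  have c4: "\<forall>y \<in> SG n. \<exists>x \<in> PQ n.
        (\<lambda>c. smul n \<xi> (smul n \<xi> (ff n \<xi>) y) (ff n \<xi>) c - psi n \<xi> x c) \<in> J_skew"
  proof
    fix y :: "letter list \<times> nat \<Rightarrow> 'a" assume y: "y \<in> SG n"
    obtain x where x: "x \<in> PQ n" "psi n \<xi> x = y" using surj_psi[OF y] by blast
    show "\<exists>x \<in> PQ n. (\<lambda>c. smul n \<xi> (smul n \<xi> (ff n \<xi>) y) (ff n \<xi>) c - psi n \<xi> x c) \<in> J_skew"
      using x ffy[OF y] J0 by (intro bexI[of _ x]) simp_all
  qed
  show ?thesis using c1 c2 c3 c4 by blast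
qed


end
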